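(* Let $f:\mathbb{R}^n\to\mathbb{R}$ be differentiable with $L_f$-Lipschitz continuous gradient, let $g:\mathbb{R}^n\to\mathbb{R}\cup\{+\infty\}$ be proper, lower semicontinuous, $\gamma_g$-prox-bounded and $\rho$-weakly convex, let $\varphi=f+g$ with $\operatorname{argmin}\varphi\neq\emptyset$. Consider the iterates generated by the PGCL algorithm described in the context, and suppose $(\bar x^k)$ converges to a strong local minimizer $x^\star$ of $\varphi$ such that $f$ is of class $C^3$ locally around $x^\star$ and $\operatorname{prox}_{\gamma g}$ is of class $C^1$ locally around $x^\star-\gamma\nabla f(x^\star)$. If for all $k$ sufficiently large $d^k=d_N^k:=-B_k^{-1}\nabla\varphi_\gamma(\bar x^k)$, then eventually $\tau_k=1$ is always accepted, and the sequences $(x^k)$, $(\bar x^k)$, $(r^k)$ converge superlinearly (to $x^\star$, $x^\star$, $0$ respectively).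
   Context: Strong local minimizer: there exist $c,\epsilon>0$ with $\varphi(x)\ge\varphi(x^\star)+c\|x-x^\star\|^2$ whenever $\|x-x^\star\|<\epsilon$. $\gamma_g$-prox-bounded: $g+\frac1{2\gamma}\|\cdot\|^2$ bounded below for each $\gamma\in(0,\gamma_g)$; $\rho$-weakly convex: $g+\frac\rho2\|\cdot\|^2$ convex. $\operatorname{prox}_{\gamma g}(x)=\operatorname{argmin}_z\{g(z)+\frac1{2\gamma}\|z-x\|^2\}$, $T_\gamma(x)=\operatorname{prox}_{\gamma g}(x-\gamma\nabla f(x))$, $R_\gamma(x)=\gamma^{-1}(x-T_\gamma(x))$. Forward-backward envelope $\varphi_\gamma(x)=\inf_u\{f(x)+\langle\nabla f(x),u-x\rangle+g(u)+\frac1{2\gamma}\|u-x\|^2\}$. $\partial_C$: Clarke generalized Jacobian. PGCL: given $x^0$, $\gamma\in(0,\min\{1/L_f,\gamma_g\})$, $\sigma\in(0,\gamma\frac{1-\gamma L_f}{2})$, $\beta\in(0,1)$, $\mu\in(0,1)$; for $k=0,1,\dots$: select $\bar x^k\in T_\gamma(x^k)$, $r^k=\gamma^{-1}(x^k-\bar x^k)$; select $\bar r^k\in R_\gamma(\bar x^k)$, $Q_k\in I-\gamma\partial_C(\nabla f)(\bar x^k)$, $P_k\in\partial_C\operatorname{prox}_{\gamma g}(\bar x^k-\gamma\nabla f(\bar x^k))$; $B_k=\gamma^{-1}Q_k(I-P_kQ_k)$; stop if $\bar r^k=0$ and $\lambda_{\min}(B_k)\ge0$; select $d^k,s^k$ with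 $\langle Q_k\bar r^k,d^k\rangle\le0$, $\langle Q_k\bar r^k,s^k\rangle\le0$, and $\langle B_ks^k,s^k\rangle<0$ if $\lambda_{\min}(B_k)<0$, $=0$ otherwise; let $\tau_k$ be the largest element of $\{\beta^m:m\in\mathbb N\}$ such that $x^{k+1}=\bar x^k+\tau_k^2d^k+\tau_ks^k$ satisfies $\varphi_\gamma(x^{k+1})\le\varphi_\gamma(x^k)-\sigma\|r^k\|^2+\frac\mu2\tau_k^2\langle B_ks^k,s^k\rangle$. *)

theory Defs
  imports "HOL-Analysis.Analysis"
begin

text \<open>Basic notions on the ambient space real^'n (R^n for an arbitrary fixed n);
  extended-real-valued functions use the type ereal (value +\<infinity> allowed).\<close>

definition proper_fun :: "('a \<Rightarrow> ereal) \<Rightarrow> bool" where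
  "proper_fun g \<longleftrightarrow> (\<forall>x. g x \<noteq> -\<infinity>) \<and> (\<exists>x. g x \<noteq> \<infinity>)"

definition lsc_fun :: "('a::topological_space \<Rightarrow> ereal) \<Rightarrow> bool" where
  "lsc_fun g \<longleftrightarrow> (\<forall>x. g x \<le> Liminf (at x) g)"

text \<open>gamma_g-prox-boundedness: g + 1/(2 gamma) norm^2 bounded below for every gamma in (0, gamma_g).\<close>
definition prox_bounded :: "ereal \<Rightarrow> ('a::real_normed_vector \<Rightarrow> ereal) \<Rightarrow> bool" where
  "prox_bounded \<gamma>g g \<longleftrightarrow>
     (\<forall>\<gamma>::real. 0 < \<gamma> \<and> ereal \<gamma> < \<gamma>g \<longrightarrow>
        (\<exists>c::real. \<forall>x. ereal c \<le> g x + ereal (norm x ^ 2 / (2 * \<gamma>))))"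

text \<open>Convexity of an extended-real-valued function (epigraph/Jensen form).\<close>
definition ereal_convex :: "('a::real_vector \<Rightarrow> ereal) \<Rightarrow> bool" where
  "ereal_convex h \<longleftrightarrow>
     (\<forall>x y. \<forall>t::real. 0 \<le> t \<and> t \<le> 1 \<longrightarrow>
        h ((1 - t) *\<^sub>R x + t *\<^sub>R y) \<le> ereal (1 - t) * h x + ereal t * h y)"

text \<open>rho-weak convexity: g + rho/2 norm^2 convex.\<close>
definition weakly_convex :: "real \<Rightarrow> ('a::real_normed_vector \<Rightarrow> ereal) \<Rightarrow> bool" where
  "weakly_convex \<rho> g \<longleftrightarrow> ereal_convex (\<lambda>x. g x + ereal (\<rho> / 2 * norm x ^ 2))"

text \<open>Proximal mapping (set-valued): prox_{gamma g}(x) = argmin_z g z + 1/(2 gamma) norm (z - x)^2.\<close>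
definition prox :: "real \<Rightarrow> ('a::real_normed_vector \<Rightarrow> ereal) \<Rightarrow> 'a \<Rightarrow> 'a set" where
  "prox \<gamma> g x = {z. \<forall>w. g z + ereal (norm (z - x) ^ 2 / (2 * \<gamma>))
                        \<le> g w + ereal (norm (w - x) ^ 2 / (2 * \<gamma>))}"

text \<open>Forward-backward operator T_gamma (set-valued); Df is the gradient of f.\<close>
definition fb_op :: "real \<Rightarrow> ('a::real_normed_vector \<Rightarrow> 'a) \<Rightarrow> ('a \<Rightarrow> ereal) \<Rightarrow> 'a \<Rightarrow> 'a set" where
  "fb_op \<gamma> Df g x = prox \<gamma> g (x - \<gamma> *\<^sub>R Df x)"

text \<open>Fixed-point residual R_gamma (set-valued).\<close>
definition fb_res :: "real \<Rightarrow> ('a::real_normed_vector \<Rightarrow> 'a) \<Rightarrow> ('a \<Rightarrow> ereal) \<Rightarrow> 'a \<Rightarrow> 'a set" where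
  "fb_res \<gamma> Df g x = (\<lambda>z. (1 / \<gamma>) *\<^sub>R (x - z)) ` fb_op \<gamma> Df g x"

text \<open>Forward-backward envelope. It is finite-valued under the standing assumptions
  (gamma below the prox-boundedness threshold, g proper), so it is taken as a real number.\<close>
definition fbe :: "real \<Rightarrow> ('a::real_inner \<Rightarrow> real) \<Rightarrow> ('a \<Rightarrow> 'a) \<Rightarrow> ('a \<Rightarrow> ereal) \<Rightarrow> 'a \<Rightarrow> real" where
  "fbe \<gamma> f Df g x = real_of_ereal
     (INF u. ereal (f x + inner (Df x) (u - x) + norm (u - x) ^ 2 / (2 * \<gamma>)) + g u)"

text \<open>Clarke generalized Jacobian of F at x: convex hull of all limits of Jacobians
  J_k of F at points y_k -> x where F is differentiable.\<close>
definition clarke_jac :: "(real^'n \<Rightarrow> real^'n) \<Rightarrow> real^'n \<Rightarrow> (real^'n^'n) set" where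
  "clarke_jac F x = convex hull
     {A. \<exists>y J. (\<forall>k. (F has_derivative (\<lambda>h. J k *v h)) (at (y k)))
               \<and> y \<longlonglongrightarrow> x \<and> J \<longlonglongrightarrow> A}"

text \<open>Clarke generalized Jacobian of a (possibly set-valued) map S, used for prox:
  the differentiability points are those near which S is single-valued, S z = {p z},
  with p differentiable there. For S = (\<lambda>z. {F z}) this is clarke_jac F.\<close>
definition clarke_jac_sv :: "(real^'n \<Rightarrow> (real^'n) set) \<Rightarrow> real^'n \<Rightarrow> (real^'n^'n) set" where
  "clarke_jac_sv S x = convex hull
     {A. \<exists>y J. (\<forall>k. \<exists>U p. open U \<and> y k \<in> U \<and> (\<forall>z\<in>U. S z = {p z})
                         \<and> (p has_derivative (\<lambda>h. J k *v h)) (at (y k)))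
               \<and> y \<longlonglongrightarrow> x \<and> J \<longlonglongrightarrow> A}"

text \<open>Real eigenvalues and smallest eigenvalue of a square matrix
  (the matrices B_k of the algorithm are symmetric).\<close>
definition real_eigenvalues :: "real^'n^'n \<Rightarrow> real set" where
  "real_eigenvalues B = {l. \<exists>v. v \<noteq> 0 \<and> B *v v = l *\<^sub>R v}"

definition lambda_min :: "real^'n^'n \<Rightarrow> real" where
  "lambda_min B = Min (real_eigenvalues B)"

text \<open>Strong local minimizer.\<close>
definition strong_local_min :: "('a::real_normed_vector \<Rightarrow> ereal) \<Rightarrow> 'a \<Rightarrow> bool" where
  "strong_local_min \<phi> xs \<longleftrightarrow> (\<exists>c>0. \<exists>\<epsilon>>0. \<forall>x. norm (x - xs) < \<epsilon> \<longrightarrow>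
       \<phi> xs + ereal (c * norm (x - xs) ^ 2) \<le> \<phi> x)"

text \<open>C^1 and C^3 on a set (derivatives as bounded linear functions, last one continuous).\<close>
definition C1_on :: "'a::real_normed_vector set \<Rightarrow> ('a \<Rightarrow> 'b::real_normed_vector) \<Rightarrow> bool" where
  "C1_on U F \<longleftrightarrow> (\<exists>D1. (\<forall>x\<in>U. (F has_derivative blinfun_apply (D1 x)) (at x))
                     \<and> continuous_on U D1)"

definition C3_on :: "'a::real_normed_vector set \<Rightarrow> ('a \<Rightarrow> 'b::real_normed_vector) \<Rightarrow> bool" where
  "C3_on U F \<longleftrightarrow> (\<exists>D1 D2 D3.
       (\<forall>x\<in>U. (F has_derivative blinfun_apply (D1 x)) (at x))
     \<and> (\<forall>x\<in>U. (D1 has_derivative blinfun_apply (D2 x)) (at x))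
     \<and> (\<forall>x\<in>U. (D2 has_derivative blinfun_apply (D3 x)) (at x))
     \<and> continuous_on U D3)"

text \<open>Q-superlinear convergence of a sequence u to a:
  u_k -> a and norm (u_{k+1} - a) = o(norm (u_k - a)).\<close>
definition superlinear_conv :: "(nat \<Rightarrow> 'a::real_normed_vector) \<Rightarrow> 'a \<Rightarrow> bool" where
  "superlinear_conv u a \<longleftrightarrow> u \<longlonglongrightarrow> a \<and>
     (\<forall>\<epsilon>>0. eventually (\<lambda>k. norm (u (Suc k) - a) \<le> \<epsilon> * norm (u k - a)) sequentially)"

end

theory Submission
  imports Defs
begin


lemma path_deriv:
  fixes f :: "'a::real_inner \<Rightarrow> real"
  assumes "\<And>y. GDERIV f y :> Df y"
  shows "((\<lambda>t. f (x + t *\<^sub>R v)) has_real_derivative (Df (x + t *\<^sub>R v) \<bullet> v)) (at t)"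
proof -
  have "((\<lambda>t. x + t *\<^sub>R v) has_derivative (\<lambda>s. s *\<^sub>R v)) (at t)"
    by (auto intro!: derivative_eq_intros)
  moreover have "(f has_derivative (\<lambda>h. h \<bullet> Df (x + t *\<^sub>R v))) (at (x + t *\<^sub>R v))"
    using assms by (simp add: gderiv_def)
  ultimately have "((\<lambda>t. f (x + t *\<^sub>R v)) has_derivative (\<lambda>s. (s *\<^sub>R v) \<bullet> Df (x + t *\<^sub>R v))) (at t)"
    by (rule has_derivative_compose)
  then show ?thesis
    unfolding has_field_derivative_def by (rule has_derivative_eq_rhs) (auto simp: inner_commute)
qed

lemma descent:
  fixes f :: "'a::real_inner \<Rightarrow> real"
  assumes fg: "\<And>y. GDERIV f y :> Df y" and lip: "L-lipschitz_on UNIV Df"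
  shows "f u \<le> f x + Df x \<bullet> (u - x) + L / 2 * (norm (u - x))\<^sup>2"
    and "f x + Df x \<bullet> (u - x) - L / 2 * (norm (u - x))\<^sup>2 \<le> f u"
proof -
  define v where "v = u - x"
  have L0: "0 \<le> L" using lip lipschitz_on_nonneg by blast
  have bd: "\<bar>Df (x + t *\<^sub>R v) \<bullet> v - Df x \<bullet> v\<bar> \<le> L * t * (norm v)\<^sup>2" if "0 \<le> t" for t
  proof -
    have "\<bar>Df (x + t *\<^sub>R v) \<bullet> v - Df x \<bullet> v\<bar> = \<bar>(Df (x + t *\<^sub>R v) - Df x) \<bullet> v\<bar>"
      by (simp add: inner_diff_left)
    also have "\<dots> \<le> norm (Df (x + t *\<^sub>R v) - Df x) * norm v" by (rule Cauchy_Schwarz_ineq2)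
    also have "norm (Df (x + t *\<^sub>R v) - Df x) \<le> L * norm (t *\<^sub>R v)"
      using lipschitz_onD[OF lip, of "x + t *\<^sub>R v" x] by (simp add: dist_norm)
    then have "norm (Df (x + t *\<^sub>R v) - Df x) * norm v \<le> L * norm (t *\<^sub>R v) * norm v"
      by (simp add: mult_right_mono)
    also have "\<dots> = L * t * (norm v)\<^sup>2" using that by (simp add: power2_eq_square)
    finally show ?thesis .
  qed
  define a where "a t = f (x + t *\<^sub>R v) - t * (Df x \<bullet> v) - L / 2 * t\<^sup>2 * (norm v)\<^sup>2" for t
  define b where "b t = f (x + t *\<^sub>R v) - t * (Df x \<bullet> v) + L / 2 * t\<^sup>2 * (norm v)\<^sup>2" for t
  have "a 1 \<le> a 0"
  proof (rule DERIV_nonpos_imp_nonincreasing[of 0 1 a])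
    fix t :: real assume t: "0 \<le> t" "t \<le> 1"
    have "(a has_real_derivative (Df (x + t *\<^sub>R v) \<bullet> v - Df x \<bullet> v - L * t * (norm v)\<^sup>2)) (at t)"
      unfolding a_def
      by (rule derivative_eq_intros path_deriv[OF fg] | simp)+
    then show "\<exists>y. (a has_real_derivative y) (at t) \<and> y \<le> 0"
      using bd[OF t(1)] by force
  qed simp
  then show "f u \<le> f x + Df x \<bullet> (u - x) + L / 2 * (norm (u - x))\<^sup>2"
    by (simp add: a_def v_def)
  have "b 0 \<le> b 1"
  proof (rule DERIV_nonneg_imp_nondecreasing[of 0 1 b])
    fix t :: real assume t: "0 \<le> t" "t \<le> 1"
    have "(b has_real_derivative (Df (x + t *\<^sub>R v) \<bullet> v - Df x \<bullet> v + L * t * (norm v)\<^sup>2)) (at t)"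
      unfolding b_def
      by (rule derivative_eq_intros path_deriv[OF fg] | simp)+
    then show "\<exists>y. (b has_real_derivative y) (at t) \<and> 0 \<le> y"
      using bd[OF t(1)] by force
  qed simp
  then show "f x + Df x \<bullet> (u - x) - L / 2 * (norm (u - x))\<^sup>2 \<le> f u"
    by (simp add: b_def v_def)
qed



lemma fbe_prox:
  fixes f :: "'a::real_inner \<Rightarrow> real" and g :: "'a \<Rightarrow> ereal"
  assumes gp: "proper_fun g" and gam: "0 < \<gamma>" and u: "u \<in> fb_op \<gamma> Df g x"
  shows "g u = ereal (real_of_ereal (g u))"
    and "fbe \<gamma> f Df g x = f x + Df x \<bullet> (u - x) + (norm (u - x))\<^sup>2 / (2 * \<gamma>) + real_of_ereal (g u)"
    and "\<And>w. ereal (fbe \<gamma> f Df g x) \<le> ereal (f x + Df x \<bullet> (w - x) + (norm (w - x))\<^sup>2 / (2 * \<gamma>)) + g w"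
proof -
  define z where "z = x - \<gamma> *\<^sub>R Df x"
  define K where "K = f x - \<gamma> / 2 * (norm (Df x))\<^sup>2"
  have pr: "\<And>w. g u + ereal ((norm (u - z))\<^sup>2 / (2 * \<gamma>)) \<le> g w + ereal ((norm (w - z))\<^sup>2 / (2 * \<gamma>))"
    using u unfolding fb_op_def prox_def z_def by auto
  have idt: "f x + Df x \<bullet> (w - x) + (norm (w - x))\<^sup>2 / (2 * \<gamma>) = K + (norm (w - z))\<^sup>2 / (2 * \<gamma>)" for w
  proof -
    have "(norm (w - z))\<^sup>2 = (norm (w - x))\<^sup>2 + 2 * \<gamma> * ((w - x) \<bullet> Df x) + \<gamma>\<^sup>2 * (norm (Df x))\<^sup>2"
      unfolding z_def power2_norm_eq_inner
      by (simp add: algebra_simps inner_diff_left inner_diff_right inner_add_left inner_add_right inner_commute power2_eq_square)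
    then show ?thesis using gam unfolding K_def by (simp add: field_simps inner_commute power2_eq_square)
  qed
  define c where "c w = ereal (f x + Df x \<bullet> (w - x) + (norm (w - x))\<^sup>2 / (2 * \<gamma>)) + g w" for w
  have c_alt: "c w = ereal K + (g w + ereal ((norm (w - z))\<^sup>2 / (2 * \<gamma>)))" for w
    unfolding c_def idt plus_ereal.simps(1)[symmetric] by (simp only: ac_simps)
  have cle: "c u \<le> c w" for w
    unfolding c_alt by (rule add_left_mono[OF pr])
  obtain x0 where x0: "g x0 \<noteq> \<infinity>" using gp unfolding proper_fun_def by auto
  have "g u \<noteq> -\<infinity>" using gp unfolding proper_fun_def by auto
  moreover have "g u \<noteq> \<infinity>"
  proof
    assume "g u = \<infinity>"
    then have "g x0 + ereal ((norm (x0 - z))\<^sup>2 / (2 * \<gamma>)) = \<infinity>" using pr[of x0] by simp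
    then show False using x0 by simp
  qed
  ultimately show gu: "g u = ereal (real_of_ereal (g u))" by (cases "g u") auto
  have inf: "(INF w. c w) = c u"
    by (rule antisym) (auto intro: INF_lower INF_greatest cle)
  have "fbe \<gamma> f Df g x = real_of_ereal (INF w. c w)"
    unfolding fbe_def c_def by simp
  also have "\<dots> = real_of_ereal (c u)" using inf by simp
  also have "\<dots> = f x + Df x \<bullet> (u - x) + (norm (u - x))\<^sup>2 / (2 * \<gamma>) + real_of_ereal (g u)"
    unfolding c_def by (subst gu) simp
  finally show fbe_eq: "fbe \<gamma> f Df g x = f x + Df x \<bullet> (u - x) + (norm (u - x))\<^sup>2 / (2 * \<gamma>) + real_of_ereal (g u)" .
  fix w
  have "ereal (fbe \<gamma> f Df g x) = c u" unfolding fbe_eq c_def by (subst gu) simp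
  also have "\<dots> \<le> c w" by (rule cle)
  finally show "ereal (fbe \<gamma> f Df g x) \<le> ereal (f x + Df x \<bullet> (w - x) + (norm (w - x))\<^sup>2 / (2 * \<gamma>)) + g w"
    unfolding c_def .
qed



definition mclose :: "real^'n^'n \<Rightarrow> real^'n^'n \<Rightarrow> real \<Rightarrow> bool" where
  "mclose A B e \<longleftrightarrow> (\<forall>h. norm ((A - B) *v h) \<le> e * norm h)"

lemma isCont_mvmult: "isCont (\<lambda>A::real^'n^'m. A *v h) A"
proof -
  have "linear (\<lambda>A::real^'n^'m. A *v h)"
    by (rule linearI) (simp_all add: matrix_vector_mult_add_rdistrib scaleR_matrix_vector_assoc)
  then show ?thesis by (simp add: linear_continuous_at linear_conv_bounded_linear)
qed

lemma mclose_convex: "convex {A. mclose A B e}" for B :: "real^'n^'n"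
  unfolding convex_def mclose_def
proof (clarsimp)
  fix x y :: "real^'n^'n" and u v :: real and h :: "real^'n"
  assume x: "\<forall>h. norm ((x - B) *v h) \<le> e * norm h" and y: "\<forall>h. norm ((y - B) *v h) \<le> e * norm h"
    and u: "0 \<le> u" and v: "0 \<le> v" and uv: "u + v = 1"
  have "u *\<^sub>R x + v *\<^sub>R y - B = u *\<^sub>R (x - B) + v *\<^sub>R (y - B)"
    using uv by (simp add: algebra_simps flip: scaleR_add_left)
  then have "(u *\<^sub>R x + v *\<^sub>R y - B) *v h = u *\<^sub>R ((x - B) *v h) + v *\<^sub>R ((y - B) *v h)"
    by (simp add: matrix_vector_mult_add_rdistrib scaleR_matrix_vector_assoc)
  then have "norm ((u *\<^sub>R x + v *\<^sub>R y - B) *v h) \<le> u * norm ((x - B) *v h) + v * norm ((y - B) *v h)"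
    using u v by (metis (no_types, lifting) abs_of_nonneg norm_scaleR norm_triangle_ineq)
  also have "\<dots> \<le> u * (e * norm h) + v * (e * norm h)"
    using x y u v by (intro add_mono mult_left_mono) auto
  also have "\<dots> = (u + v) * (e * norm h)" by (simp add: algebra_simps)
  also have "\<dots> = e * norm h" using uv by simp
  finally show "norm ((u *\<^sub>R x + v *\<^sub>R y - B) *v h) \<le> e * norm h" .
qed

lemma mclose_limit:
  fixes Jk :: "nat \<Rightarrow> real^'n^'n"
  assumes "Jk \<longlonglongrightarrow> A" and "eventually (\<lambda>k. mclose (Jk k) B e) sequentially"
  shows "mclose A B e"
  unfolding mclose_def
proof
  fix h :: "real^'n"
  have "(\<lambda>k. Jk k *v h - B *v h) \<longlonglongrightarrow> A *v h - B *v h"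
    by (intro tendsto_diff tendsto_const isCont_tendsto_compose[OF isCont_mvmult assms(1)])
  moreover have "eventually (\<lambda>k. norm (Jk k *v h - B *v h) \<le> e * norm h) sequentially"
    using assms(2) unfolding mclose_def by (auto elim: eventually_mono simp: matrix_vector_mult_diff_rdistrib)
  ultimately have "norm (A *v h - B *v h) \<le> e * norm h"
    by (rule Lim_norm_ubound[rotated]) simp
  then show "norm ((A - B) *v h) \<le> e * norm h" by (simp add: matrix_vector_mult_diff_rdistrib)
qed

lemma eventually_in_ball:
  fixes y :: "nat \<Rightarrow> 'a::real_normed_vector"
  assumes "y \<longlonglongrightarrow> x" "norm (x - x0) < \<delta>"
  shows "eventually (\<lambda>k. norm (y k - x0) < \<delta>) sequentially"
proof -
  have "open (ball x0 \<delta>)" "x \<in> ball x0 \<delta>" using assms(2) by (auto simp: dist_norm norm_minus_commute)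
  then have "eventually (\<lambda>k. y k \<in> ball x0 \<delta>) sequentially"
    using assms(1) tendsto_def by blast
  then show ?thesis by (auto elim!: eventually_mono simp: dist_norm norm_minus_commute)
qed

lemma clarke_close:
  fixes F :: "real^'n \<Rightarrow> real^'n"
  assumes H: "\<And>y. norm (y - x0) < \<delta> \<Longrightarrow> (F has_derivative (*v) (J y)) (at y) \<and> mclose (J y) J0 e"
    and x: "norm (x - x0) < \<delta>" and A: "A \<in> clarke_jac F x"
  shows "mclose A J0 e"
proof -
  have "{A. \<exists>y J. (\<forall>k. (F has_derivative (\<lambda>h. J k *v h)) (at (y k))) \<and> y \<longlonglongrightarrow> x \<and> J \<longlonglongrightarrow> A}
        \<subseteq> {A. mclose A J0 e}"
  proof clarify
    fix A' y and Jk :: "nat \<Rightarrow> real^'n^'n"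
    assume d: "\<forall>k. (F has_derivative (\<lambda>h. Jk k *v h)) (at (y k))" and y: "y \<longlonglongrightarrow> x" and Jl: "Jk \<longlonglongrightarrow> A'"
    have "eventually (\<lambda>k. norm (y k - x0) < \<delta>) sequentially"
      by (rule eventually_in_ball[OF y x])
    then have "eventually (\<lambda>k. mclose (Jk k) J0 e) sequentially"
    proof (rule eventually_mono)
      fix k assume k: "norm (y k - x0) < \<delta>"
      have "(\<lambda>h. Jk k *v h) = (*v) (J (y k))"
        using has_derivative_unique[OF d[rule_format, of k]] H[OF k] by blast
      then have "Jk k = J (y k)" by (metis matrix_eq)
      then show "mclose (Jk k) J0 e" using H[OF k] by simp
    qed
    then show "mclose A' J0 e" by (rule mclose_limit[OF Jl])
  qed
  then have "clarke_jac F x \<subseteq> {A. mclose A J0 e}"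
    unfolding clarke_jac_def by (intro hull_minimal mclose_convex)
  then show ?thesis using A by auto
qed

lemma clarke_sv_close:
  fixes S :: "real^'n \<Rightarrow> (real^'n) set"
  assumes H: "\<And>z. norm (z - z0) < \<delta> \<Longrightarrow> S z = {p z} \<and> (p has_derivative (*v) (J z)) (at z) \<and> mclose (J z) J0 e"
    and x: "norm (x - z0) < \<delta>" and A: "A \<in> clarke_jac_sv S x"
  shows "mclose A J0 e"
proof -
  have "{A. \<exists>y J. (\<forall>k. \<exists>U p. open U \<and> y k \<in> U \<and> (\<forall>z\<in>U. S z = {p z})
                         \<and> (p has_derivative (\<lambda>h. J k *v h)) (at (y k)))
               \<and> y \<longlonglongrightarrow> x \<and> J \<longlonglongrightarrow> A} \<subseteq> {A. mclose A J0 e}"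
  proof clarify
    fix A' y and Jk :: "nat \<Rightarrow> real^'n^'n"
    assume d: "\<forall>k. \<exists>U p. open U \<and> y k \<in> U \<and> (\<forall>z\<in>U. S z = {p z})
                         \<and> (p has_derivative (\<lambda>h. Jk k *v h)) (at (y k))"
      and y: "y \<longlonglongrightarrow> x" and Jl: "Jk \<longlonglongrightarrow> A'"
    have "eventually (\<lambda>k. norm (y k - z0) < \<delta>) sequentially"
      by (rule eventually_in_ball[OF y x])
    then have "eventually (\<lambda>k. mclose (Jk k) J0 e) sequentially"
    proof (rule eventually_mono)
      fix k assume k: "norm (y k - z0) < \<delta>"
      obtain U p' where U: "open U" "y k \<in> U" "\<forall>z\<in>U. S z = {p' z}"
        and dp: "(p' has_derivative (\<lambda>h. Jk k *v h)) (at (y k))"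
        using d by blast
      have "(p has_derivative (\<lambda>h. Jk k *v h)) (at (y k))"
      proof (rule has_derivative_transform_within_open[OF dp, of "U \<inter> ball z0 \<delta>"])
        show "open (U \<inter> ball z0 \<delta>)" using U by auto
        show "y k \<in> U \<inter> ball z0 \<delta>" using U k by (auto simp: dist_norm norm_minus_commute)
        fix z assume z: "z \<in> U \<inter> ball z0 \<delta>"
        then have "norm (z - z0) < \<delta>" by (auto simp: dist_norm norm_minus_commute)
        then have "S z = {p z}" using H by blast
        moreover have "S z = {p' z}" using U z by blast
        ultimately show "p' z = p z" by simp
      qed
      then have "(\<lambda>h. Jk k *v h) = (*v) (J (y k))"
        using has_derivative_unique H[OF k] by blast
      then have "Jk k = J (y k)" by (metis matrix_eq)
      then show "mclose (Jk k) J0 e" using H[OF k] by simp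
    qed
    then show "mclose A' J0 e" by (rule mclose_limit[OF Jl])
  qed
  then have "clarke_jac_sv S x \<subseteq> {A. mclose A J0 e}"
    unfolding clarke_jac_sv_def by (intro hull_minimal mclose_convex)
  then show ?thesis using A by auto
qed



lemma deriv_matrix:
  fixes G :: "real^'n \<Rightarrow> real^'n"
  assumes der: "\<And>y. y \<in> V \<Longrightarrow> (G has_derivative A y) (at y)"
    and cont: "\<And>y e. y \<in> V \<Longrightarrow> e > 0 \<Longrightarrow> \<exists>d>0. \<forall>y'. norm (y' - y) < d \<longrightarrow> y' \<in> V \<and> (\<forall>h. norm (A y' h - A y h) \<le> e * norm h)"
  shows "\<exists>J. \<forall>y\<in>V. (G has_derivative (*v) (J y)) (at y) \<and>
            (\<forall>e>0. \<exists>d>0. \<forall>y'. norm (y' - y) < d \<longrightarrow> y' \<in> V \<and> mclose (J y') (J y) e)"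
proof (rule exI[of _ "\<lambda>y. matrix (A y)"], intro ballI conjI allI impI)
  have lin: "linear (A y)" if "y \<in> V" for y
    using der[OF that] has_derivative_linear by blast
  have mw: "(*v) (matrix (A y)) = A y" if "y \<in> V" for y
    using matrix_vector_mul(2)[OF lin[OF that]] by auto
  fix y assume y: "y \<in> V"
  show "(G has_derivative (*v) (matrix (A y))) (at y)" using der[OF y] mw[OF y] by simp
  fix e :: real assume e: "e > 0"
  obtain d where d: "d > 0" "\<forall>y'. norm (y' - y) < d \<longrightarrow> y' \<in> V \<and> (\<forall>h. norm (A y' h - A y h) \<le> e * norm h)"
    using cont[OF y e] by blast
  show "\<exists>d>0. \<forall>y'. norm (y' - y) < d \<longrightarrow> y' \<in> V \<and> mclose (matrix (A y')) (matrix (A y)) e"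
  proof (intro exI[of _ d] conjI allI impI)
    show "d > 0" by (rule d(1))
    fix y' assume y': "norm (y' - y) < d"
    then show "y' \<in> V" using d by blast
    then show "mclose (matrix (A y')) (matrix (A y)) e"
      unfolding mclose_def matrix_vector_mult_diff_rdistrib
      using d y' by (metis mw[OF y] mw[OF \<open>y' \<in> V\<close>])
  qed
qed

definition grad_of :: "((real^'n) \<Rightarrow>\<^sub>L real) \<Rightarrow> real^'n" where
  "grad_of l = (\<chi> i. blinfun_apply l (axis i 1))"

lemma grad_of_bl: "bounded_linear (grad_of :: ((real^'n) \<Rightarrow>\<^sub>L real) \<Rightarrow> real^'n)"
proof (rule bounded_linear_intro[where K = "real CARD('n)"])
  fix x y :: "(real^'n) \<Rightarrow>\<^sub>L real" and r :: real
  show "grad_of (x + y) = grad_of x + grad_of y" unfolding grad_of_def by (simp add: vec_eq_iff blinfun.add_left)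
  show "grad_of (r *\<^sub>R x) = r *\<^sub>R grad_of x" unfolding grad_of_def by (simp add: vec_eq_iff blinfun.scaleR_left)
  have "norm (grad_of x) \<le> (\<Sum>i\<in>UNIV. \<bar>grad_of x $ i\<bar>)" by (rule norm_le_l1_cart)
  also have "\<dots> \<le> (\<Sum>i\<in>(UNIV::'n set). norm x)"
  proof (rule sum_mono)
    fix i :: 'n
    have "\<bar>grad_of x $ i\<bar> = norm (blinfun_apply x (axis i 1))" unfolding grad_of_def by simp
    also have "\<dots> \<le> norm x * norm (axis i (1::real))" by (rule norm_blinfun)
    finally show "\<bar>grad_of x $ i\<bar> \<le> norm x" by simp
  qed
  finally show "norm (grad_of x) \<le> norm x * real CARD('n)" by (simp add: mult.commute)
qed

lemma grad_of_diff: "grad_of a - grad_of b = grad_of (a - b)"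
  by (simp add: grad_of_def vec_eq_iff blinfun.diff_left)

lemma C1_matrix:
  fixes p :: "real^'n \<Rightarrow> real^'n"
  assumes "open U" "C1_on U p"
  shows "\<exists>J. \<forall>y\<in>U. (p has_derivative (*v) (J y)) (at y) \<and>
            (\<forall>e>0. \<exists>d>0. \<forall>y'. norm (y' - y) < d \<longrightarrow> y' \<in> U \<and> mclose (J y') (J y) e)"
proof -
  obtain D1 where D1: "\<forall>x\<in>U. (p has_derivative blinfun_apply (D1 x)) (at x)" "continuous_on U D1"
    using assms(2) unfolding C1_on_def by blast
  show ?thesis
  proof (rule deriv_matrix[where A = "\<lambda>y. blinfun_apply (D1 y)"])
    show "\<And>y. y \<in> U \<Longrightarrow> (p has_derivative blinfun_apply (D1 y)) (at y)" using D1 by blast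
    fix y and e :: real assume y: "y \<in> U" and e: "e > 0"
    have "isCont D1 y" using D1(2) assms(1) y continuous_on_eq_continuous_at by blast
    then obtain d1 where d1: "d1 > 0" "\<forall>y'. dist y' y < d1 \<longrightarrow> dist (D1 y') (D1 y) < e"
      using e unfolding continuous_at_eps_delta by blast
    obtain d2 where d2: "d2 > 0" "ball y d2 \<subseteq> U" using assms(1) y open_contains_ball by blast
    show "\<exists>d>0. \<forall>y'. norm (y' - y) < d \<longrightarrow> y' \<in> U \<and> (\<forall>h. norm (blinfun_apply (D1 y') h - blinfun_apply (D1 y) h) \<le> e * norm h)"
    proof (intro exI[of _ "min d1 d2"] conjI allI impI)
      fix y' h assume y': "norm (y' - y) < min d1 d2"
      then show "y' \<in> U" using d2 by (auto simp: dist_norm norm_minus_commute)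
      have "norm (D1 y' - D1 y) < e" using d1 y' by (auto simp: dist_norm)
      have "norm (blinfun_apply (D1 y') h - blinfun_apply (D1 y) h) = norm (blinfun_apply (D1 y' - D1 y) h)"
        by (simp add: blinfun.diff_left)
      also have "\<dots> \<le> norm (D1 y' - D1 y) * norm h" by (rule norm_blinfun)
      also have "\<dots> \<le> e * norm h" using \<open>norm (D1 y' - D1 y) < e\<close> by (simp add: mult_right_mono)
      finally show "norm (blinfun_apply (D1 y') h - blinfun_apply (D1 y) h) \<le> e * norm h" .
    qed (use d1 d2 in auto)
  qed
qed

lemma C3_matrix:
  fixes f :: "real^'n \<Rightarrow> real"
  assumes fg: "\<And>y. GDERIV f y :> Df y" and "open V" "C3_on V f"
  shows "\<exists>J. \<forall>y\<in>V. (Df has_derivative (*v) (J y)) (at y) \<and>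
            (\<forall>e>0. \<exists>d>0. \<forall>y'. norm (y' - y) < d \<longrightarrow> y' \<in> V \<and> mclose (J y') (J y) e)"
proof -
  obtain D1 D2 D3 where D: "\<forall>x\<in>V. (f has_derivative blinfun_apply (D1 x)) (at x)"
     "\<forall>x\<in>V. (D1 has_derivative blinfun_apply (D2 x)) (at x)"
     "\<forall>x\<in>V. (D2 has_derivative blinfun_apply (D3 x)) (at x)"
    using assms(3) unfolding C3_on_def by blast
  have eq: "Df y = grad_of (D1 y)" if "y \<in> V" for y
  proof -
    have "blinfun_apply (D1 y) = (\<lambda>h. h \<bullet> Df y)"
      using has_derivative_unique D(1) that fg unfolding gderiv_def by blast
    then show ?thesis unfolding grad_of_def by (simp add: vec_eq_iff inner_axis inner_axis' inner_commute)
  qed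
  have der: "(Df has_derivative (\<lambda>h. grad_of (blinfun_apply (D2 y) h))) (at y)" if y: "y \<in> V" for y
  proof -
    have "((\<lambda>x. grad_of (D1 x)) has_derivative (\<lambda>h. grad_of (blinfun_apply (D2 y) h))) (at y)"
      by (rule bounded_linear.has_derivative[OF grad_of_bl]) (use D(2) y in blast)
    then show ?thesis
      by (rule has_derivative_transform_within_open[OF _ assms(2) y]) (simp add: eq)
  qed
  obtain K where K: "K > 0" "\<And>x::(real^'n) \<Rightarrow>\<^sub>L real. norm (grad_of x) \<le> norm x * K"
    using bounded_linear.pos_bounded[OF grad_of_bl] by blast
  show ?thesis
  proof (rule deriv_matrix[where A = "\<lambda>y h. grad_of (blinfun_apply (D2 y) h)"])
    show "\<And>y. y \<in> V \<Longrightarrow> (Df has_derivative (\<lambda>h. grad_of (blinfun_apply (D2 y) h))) (at y)" by (rule der)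
    fix y and e :: real assume y: "y \<in> V" and e: "e > 0"
    have "isCont D2 y" using D(3) y has_derivative_continuous by blast
    then obtain d1 where d1: "d1 > 0" "\<forall>y'. dist y' y < d1 \<longrightarrow> dist (D2 y') (D2 y) < e / K"
      using e K unfolding continuous_at_eps_delta by (meson divide_pos_pos)
    obtain d2 where d2: "d2 > 0" "ball y d2 \<subseteq> V" using assms(2) y open_contains_ball by blast
    show "\<exists>d>0. \<forall>y'. norm (y' - y) < d \<longrightarrow> y' \<in> V \<and> (\<forall>h. norm (grad_of (blinfun_apply (D2 y') h) - grad_of (blinfun_apply (D2 y) h)) \<le> e * norm h)"
    proof (intro exI[of _ "min d1 d2"] conjI allI impI)
      fix y' h assume y': "norm (y' - y) < min d1 d2"
      then show "y' \<in> V" using d2 by (auto simp: dist_norm norm_minus_commute)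
      have n: "norm (D2 y' - D2 y) < e / K" using d1 y' by (auto simp: dist_norm)
      have "norm (grad_of (blinfun_apply (D2 y') h) - grad_of (blinfun_apply (D2 y) h))
          = norm (grad_of (blinfun_apply (D2 y' - D2 y) h))"
        by (metis grad_of_diff blinfun.diff_left)
      also have "\<dots> \<le> norm (blinfun_apply (D2 y' - D2 y) h) * K" by (rule K(2))
      also have "\<dots> \<le> norm (D2 y' - D2 y) * norm h * K" using K(1) by (simp add: mult_right_mono norm_blinfun)
      also have "\<dots> \<le> (e / K) * norm h * K" using n K(1) by (intro mult_right_mono) auto
      also have "\<dots> = e * norm h" using K(1) by simp
      finally show "norm (grad_of (blinfun_apply (D2 y') h) - grad_of (blinfun_apply (D2 y) h)) \<le> e * norm h" .
    qed (use d1 d2 in auto)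
  qed
qed



lemma path_deriv_vec:
  fixes Df :: "real^'n \<Rightarrow> real^'n"
  assumes "(Df has_derivative (*v) M) (at (x + t *\<^sub>R v))"
  shows "((\<lambda>t. Df (x + t *\<^sub>R v) \<bullet> w) has_real_derivative ((M *v v) \<bullet> w)) (at t)"
proof -
  have "((\<lambda>t. x + t *\<^sub>R v) has_derivative (\<lambda>s. s *\<^sub>R v)) (at t)"
    by (auto intro!: derivative_eq_intros)
  from has_derivative_compose[OF this assms]
  have "((\<lambda>t. Df (x + t *\<^sub>R v)) has_derivative (\<lambda>s. M *v (s *\<^sub>R v))) (at t)" by (simp add: o_def)
  then have "((\<lambda>t. Df (x + t *\<^sub>R v) \<bullet> w) has_derivative (\<lambda>s. (M *v (s *\<^sub>R v)) \<bullet> w)) (at t)"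
    by (auto intro!: derivative_eq_intros)
  then show ?thesis
    unfolding has_field_derivative_def
    by (rule has_derivative_eq_rhs) (auto simp: matrix_vector_mult_scaleR fun_eq_iff)
qed

lemma mixed_diff:
  fixes f :: "real^'n \<Rightarrow> real"
  assumes fg: "\<And>y. GDERIV f y :> Df y"
    and der: "\<And>y. norm (y - x0) < \<delta> \<Longrightarrow> (Df has_derivative (*v) (J y)) (at y)"
    and inb: "\<And>s s'. 0 \<le> s \<Longrightarrow> s \<le> 1 \<Longrightarrow> 0 \<le> s' \<Longrightarrow> s' \<le> 1 \<Longrightarrow> norm (q + s *\<^sub>R h + s' *\<^sub>R k - x0) < \<delta>"
  shows "\<exists>s s'. 0 \<le> s \<and> s \<le> 1 \<and> 0 \<le> s' \<and> s' \<le> 1 \<and>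
     f (q + h + k) - f (q + h) - f (q + k) + f q = (J (q + s *\<^sub>R h + s' *\<^sub>R k) *v k) \<bullet> h"
proof -
  define a where "a s = f ((q + k) + s *\<^sub>R h) - f (q + s *\<^sub>R h)" for s
  have "\<exists>z>0. z < 1 \<and> a 1 - a 0 = (1 - 0) * (Df ((q + k) + z *\<^sub>R h) \<bullet> h - Df (q + z *\<^sub>R h) \<bullet> h)"
    unfolding a_def
    by (rule MVT2) (auto intro!: derivative_eq_intros path_deriv[OF fg])
  then obtain s where s: "0 < s" "s < 1" "a 1 - a 0 = Df ((q + k) + s *\<^sub>R h) \<bullet> h - Df (q + s *\<^sub>R h) \<bullet> h"
    by auto
  define b where "b s' = Df ((q + s *\<^sub>R h) + s' *\<^sub>R k) \<bullet> h" for s'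
  have "\<exists>z>0. z < 1 \<and> b 1 - b 0 = (1 - 0) * ((J ((q + s *\<^sub>R h) + z *\<^sub>R k) *v k) \<bullet> h)"
    unfolding b_def
  proof (rule MVT2)
    fix x :: real assume x: "0 \<le> x" "x \<le> 1"
    have "norm (q + s *\<^sub>R h + x *\<^sub>R k - x0) < \<delta>" using inb[of s x] s x by auto
    then show "((\<lambda>s'. Df (q + s *\<^sub>R h + s' *\<^sub>R k) \<bullet> h) has_real_derivative (J (q + s *\<^sub>R h + x *\<^sub>R k) *v k) \<bullet> h) (at x)"
      by (intro path_deriv_vec der)
  qed simp
  then obtain s' where s': "0 < s'" "s' < 1" "b 1 - b 0 = (J ((q + s *\<^sub>R h) + s' *\<^sub>R k) *v k) \<bullet> h"
    by auto
  have "f (q + h + k) - f (q + h) - f (q + k) + f q = a 1 - a 0"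
    unfolding a_def by (simp add: algebra_simps)
  also have "\<dots> = b 1 - b 0" unfolding s b_def by (simp add: algebra_simps)
  finally show ?thesis using s s' by (intro exI[of _ s] exI[of _ s']) auto
qed

lemma hess_sym:
  fixes f :: "real^'n \<Rightarrow> real"
  assumes fg: "\<And>y. GDERIV f y :> Df y"
    and der: "\<And>y. norm (y - x0) < \<delta> \<Longrightarrow> (Df has_derivative (*v) (J y)) (at y)"
    and cont: "\<And>e. e > 0 \<Longrightarrow> \<exists>d>0. \<forall>y. norm (y - x0) < d \<longrightarrow> mclose (J y) (J x0) e"
    and dpos: "\<delta> > 0"
  shows "(J x0 *v k) \<bullet> h = (J x0 *v h) \<bullet> k"
proof -
  have key: "\<bar>(J x0 *v k) \<bullet> h - (J x0 *v h) \<bullet> k\<bar> \<le> 2 * e * (norm h * norm k)" if e: "e > 0" for e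
  proof -
    obtain d where d: "d > 0" "\<forall>y. norm (y - x0) < d \<longrightarrow> mclose (J y) (J x0) e" using cont[OF e] by blast
    define t where "t = min \<delta> d / (2 * (norm h + norm k + 1))"
    have pos2: "norm h + norm k + 1 > 0" by (smt (verit) norm_ge_zero)
    then have "2 * (norm h + norm k + 1) > 0" by simp
    then have tpos: "t > 0" unfolding t_def using d dpos by (intro divide_pos_pos) auto
    have tsmall: "t * (norm h + norm k) < min \<delta> d"
    proof -
      have "t * (norm h + norm k) \<le> t * (norm h + norm k + 1)" using tpos by simp
      also have "\<dots> = min \<delta> d / 2" unfolding t_def using pos2 by (simp add: field_simps)
      also have "\<dots> < min \<delta> d" using d dpos by (simp add: min_def)
      finally show ?thesis .
    qed
    have nb: "norm (x0 + s *\<^sub>R a + s' *\<^sub>R b - x0) \<le> t * (norm h + norm k)"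
      if "0 \<le> s" "s \<le> 1" "0 \<le> s'" "s' \<le> 1" "(a = t *\<^sub>R h \<and> b = t *\<^sub>R k) \<or> (a = t *\<^sub>R k \<and> b = t *\<^sub>R h)" for s s' a b
    proof -
      have "norm (x0 + s *\<^sub>R a + s' *\<^sub>R b - x0) \<le> norm (s *\<^sub>R a) + norm (s' *\<^sub>R b)"
        by (metis add_diff_cancel_left' add.assoc norm_triangle_ineq)
      also have "\<dots> \<le> norm a + norm b"
        using that(1-4) by (intro add_mono) (auto intro: mult_left_le_one_le)
      also have "\<dots> = t * (norm h + norm k)" using that(5) tpos by (auto simp: algebra_simps)
      finally show ?thesis .
    qed
    obtain s1 s1' where S1: "0 \<le> s1" "s1 \<le> 1" "0 \<le> s1'" "s1' \<le> 1"
      "f (x0 + t *\<^sub>R h + t *\<^sub>R k) - f (x0 + t *\<^sub>R h) - f (x0 + t *\<^sub>R k) + f x0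
        = (J (x0 + s1 *\<^sub>R (t *\<^sub>R h) + s1' *\<^sub>R (t *\<^sub>R k)) *v (t *\<^sub>R k)) \<bullet> (t *\<^sub>R h)"
    proof -
      have "norm (x0 + s *\<^sub>R (t *\<^sub>R h) + s' *\<^sub>R (t *\<^sub>R k) - x0) < \<delta>"
        if "0 \<le> s" "s \<le> 1" "0 \<le> s'" "s' \<le> 1" for s s'
        using nb[OF that, of "t *\<^sub>R h" "t *\<^sub>R k"] tsmall by simp
      from mixed_diff[OF fg der this] show ?thesis using that by blast
    qed
    obtain s2 s2' where S2: "0 \<le> s2" "s2 \<le> 1" "0 \<le> s2'" "s2' \<le> 1"
      "f (x0 + t *\<^sub>R k + t *\<^sub>R h) - f (x0 + t *\<^sub>R k) - f (x0 + t *\<^sub>R h) + f x0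
        = (J (x0 + s2 *\<^sub>R (t *\<^sub>R k) + s2' *\<^sub>R (t *\<^sub>R h)) *v (t *\<^sub>R h)) \<bullet> (t *\<^sub>R k)"
    proof -
      have "norm (x0 + s *\<^sub>R (t *\<^sub>R k) + s' *\<^sub>R (t *\<^sub>R h) - x0) < \<delta>"
        if "0 \<le> s" "s \<le> 1" "0 \<le> s'" "s' \<le> 1" for s s'
        using nb[OF that, of "t *\<^sub>R k" "t *\<^sub>R h"] tsmall by simp
      from mixed_diff[OF fg der this] show ?thesis using that by blast
    qed
    define z1 where "z1 = x0 + s1 *\<^sub>R (t *\<^sub>R h) + s1' *\<^sub>R (t *\<^sub>R k)"
    define z2 where "z2 = x0 + s2 *\<^sub>R (t *\<^sub>R k) + s2' *\<^sub>R (t *\<^sub>R h)"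
    have h1: "f (x0 + t *\<^sub>R h + t *\<^sub>R k) - f (x0 + t *\<^sub>R h) - f (x0 + t *\<^sub>R k) + f x0 = t * (t * ((J z1 *v k) \<bullet> h))"
      using S1(5) unfolding z1_def[symmetric] by (simp add: matrix_vector_mult_scaleR)
    have h2: "f (x0 + t *\<^sub>R k + t *\<^sub>R h) - f (x0 + t *\<^sub>R k) - f (x0 + t *\<^sub>R h) + f x0 = t * (t * ((J z2 *v h) \<bullet> k))"
      using S2(5) unfolding z2_def[symmetric] by (simp add: matrix_vector_mult_scaleR)
    have ee: "x0 + t *\<^sub>R k + t *\<^sub>R h = x0 + t *\<^sub>R h + t *\<^sub>R k" by (simp add: algebra_simps)
    have "t * (t * ((J z1 *v k) \<bullet> h)) = t * (t * ((J z2 *v h) \<bullet> k))" using h1 h2[unfolded ee] by linarith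
    then have eqz: "(J z1 *v k) \<bullet> h = (J z2 *v h) \<bullet> k" using tpos by simp
    have "norm (z1 - x0) < d" using nb[OF S1(1-4), of "t *\<^sub>R h" "t *\<^sub>R k"] tsmall unfolding z1_def by simp
    then have c1: "mclose (J z1) (J x0) e" using d by blast
    have "norm (z2 - x0) < d" using nb[OF S2(1-4), of "t *\<^sub>R k" "t *\<^sub>R h"] tsmall unfolding z2_def by simp
    then have c2: "mclose (J z2) (J x0) e" using d by blast
    have b1: "\<bar>(J z1 *v k) \<bullet> h - (J x0 *v k) \<bullet> h\<bar> \<le> e * (norm h * norm k)"
    proof -
      have "\<bar>(J z1 *v k) \<bullet> h - (J x0 *v k) \<bullet> h\<bar> = \<bar>((J z1 - J x0) *v k) \<bullet> h\<bar>"
        by (simp add: matrix_vector_mult_diff_rdistrib inner_diff_left)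
      also have "\<dots> \<le> norm ((J z1 - J x0) *v k) * norm h" by (rule Cauchy_Schwarz_ineq2)
      also have "\<dots> \<le> e * norm k * norm h" using c1 unfolding mclose_def by (simp add: mult_right_mono)
      finally show ?thesis by (simp add: ac_simps)
    qed
    have b2: "\<bar>(J z2 *v h) \<bullet> k - (J x0 *v h) \<bullet> k\<bar> \<le> e * (norm h * norm k)"
    proof -
      have "\<bar>(J z2 *v h) \<bullet> k - (J x0 *v h) \<bullet> k\<bar> = \<bar>((J z2 - J x0) *v h) \<bullet> k\<bar>"
        by (simp add: matrix_vector_mult_diff_rdistrib inner_diff_left)
      also have "\<dots> \<le> norm ((J z2 - J x0) *v h) * norm k" by (rule Cauchy_Schwarz_ineq2)
      also have "\<dots> \<le> e * norm h * norm k" using c2 unfolding mclose_def by (simp add: mult_right_mono)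
      finally show ?thesis by (simp add: ac_simps)
    qed
    show ?thesis using b1 b2 eqz by linarith
  qed
  show ?thesis
  proof (rule ccontr)
    assume ne: "(J x0 *v k) \<bullet> h \<noteq> (J x0 *v h) \<bullet> k"
    define D where "D = \<bar>(J x0 *v k) \<bullet> h - (J x0 *v h) \<bullet> k\<bar>"
    have Dpos: "D > 0" using ne unfolding D_def by simp
    define e where "e = D / (4 * (norm h * norm k + 1))"
    have "0 \<le> norm h * norm k" by simp
    then have epos: "e > 0" unfolding e_def using Dpos by (intro divide_pos_pos) (auto simp: add_nonneg_pos)
    have "D \<le> 2 * e * (norm h * norm k)" using key[OF epos] unfolding D_def .
    also have "\<dots> \<le> 2 * e * (norm h * norm k + 1)" using epos by simp
    also have "\<dots> = D / 2"
    proof -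
      have "norm h * norm k + 1 > 0" using \<open>0 \<le> norm h * norm k\<close> by linarith
      then show ?thesis unfolding e_def by (simp add: field_simps)
    qed
    finally show False using Dpos by simp
  qed
qed



lemma suff_dec:
  fixes f :: "'a::real_inner \<Rightarrow> real" and g :: "'a \<Rightarrow> ereal"
  assumes fg: "\<And>y. GDERIV f y :> Df y" and lip: "L-lipschitz_on UNIV Df"
    and gp: "proper_fun g" and gam: "0 < \<gamma>" and u: "u \<in> fb_op \<gamma> Df g x"
  shows "ereal (f u) + g u \<le> ereal (fbe \<gamma> f Df g x - (1 / (2 * \<gamma>) - L / 2) * (norm (u - x))\<^sup>2)"
    and "ereal (fbe \<gamma> f Df g x) \<le> ereal (f x) + g x"
proof -
  note P1 = fbe_prox(1)[OF gp gam u] and P2 = fbe_prox(2)[OF gp gam u, where f=f]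
    and P3 = fbe_prox(3)[OF gp gam u, where f=f]
  have "f u \<le> f x + Df x \<bullet> (u - x) + L / 2 * (norm (u - x))\<^sup>2" by (rule descent(1)[OF fg lip])
  then have "f u + real_of_ereal (g u) \<le> fbe \<gamma> f Df g x - (1 / (2 * \<gamma>) - L / 2) * (norm (u - x))\<^sup>2"
    unfolding P2 by (simp add: algebra_simps)
  then show "ereal (f u) + g u \<le> ereal (fbe \<gamma> f Df g x - (1 / (2 * \<gamma>) - L / 2) * (norm (u - x))\<^sup>2)"
    by (subst P1) simp
  show "ereal (fbe \<gamma> f Df g x) \<le> ereal (f x) + g x" using P3[of x] by simp
qed

lemma fbe_deriv:
  fixes f :: "real^'n \<Rightarrow> real" and g :: "real^'n \<Rightarrow> ereal"
  assumes fg: "\<And>y. GDERIV f y :> Df y" and lip: "L-lipschitz_on UNIV Df"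
    and gp: "proper_fun g" and gam: "0 < \<gamma>"
    and N: "open N" "y \<in> N" and T: "\<And>y'. y' \<in> N \<Longrightarrow> fb_op \<gamma> Df g y' = {T y'}"
    and Tc: "isCont T y" and dM: "(Df has_derivative (*v) M) (at y)"
  shows "(fbe \<gamma> f Df g has_derivative
           (\<lambda>h. ((1 / \<gamma>) *\<^sub>R (y - T y)) \<bullet> h - \<gamma> * ((M *v h) \<bullet> ((1 / \<gamma>) *\<^sub>R (y - T y))))) (at y)"
proof -
  define u where "u = T y"
  define ll where "ll z v = f z + Df z \<bullet> (v - z) + (norm (v - z))\<^sup>2 / (2 * \<gamma>)" for z v
  define D where "D h = (M *v h) \<bullet> (u - y) + ((y - u) \<bullet> h) / \<gamma>" for h
  have L0: "0 \<le> L" using lip lipschitz_on_nonneg by blast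
  have Dder: "((\<lambda>z. ll z u) has_derivative D) (at y)"
  proof -
    have f1: "(f has_derivative (\<lambda>h. h \<bullet> Df y)) (at y)" using fg by (simp add: gderiv_def)
    show ?thesis
      unfolding ll_def power2_norm_eq_inner
      using gam by (auto intro!: derivative_eq_intros f1 dM simp: D_def fun_eq_iff inner_commute inner_diff_left inner_diff_right field_simps)
  qed
  have blD: "bounded_linear D" using Dder has_derivative_bounded_linear by blast
  have Tin: "T z \<in> fb_op \<gamma> Df g z" if "z \<in> N" for z using T[OF that] by simp
  have gfin: "g (T z) = ereal (real_of_ereal (g (T z)))" if "z \<in> N" for z using fbe_prox(1)[OF gp gam Tin[OF that]] by blast
  have fbe_eq: "fbe \<gamma> f Df g z = ll z (T z) + real_of_ereal (g (T z))" if "z \<in> N" for z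
    using fbe_prox(2)[OF gp gam Tin[OF that], where f=f] unfolding ll_def by simp
  have fbe_le: "fbe \<gamma> f Df g z \<le> ll z (T z') + real_of_ereal (g (T z'))" if "z \<in> N" "z' \<in> N" for z z'
  proof -
    have "ereal (fbe \<gamma> f Df g z) \<le> ereal (ll z (T z')) + g (T z')"
      using fbe_prox(3)[OF gp gam Tin[OF that(1)], where f=f and w="T z'"] unfolding ll_def by simp
    also have "\<dots> = ereal (ll z (T z') + real_of_ereal (g (T z')))" by (subst gfin[OF that(2)]) simp
    finally show ?thesis by simp
  qed
  have ident: "(ll z' v' - ll z v') - (ll z' v - ll z v) = (Df z' - Df z) \<bullet> (v' - v) - ((v' - v) \<bullet> (z' - z)) / \<gamma>"
    for z z' v v'
  proof -
    have "(norm (v' - z'))\<^sup>2 - (norm (v' - z))\<^sup>2 - (norm (v - z'))\<^sup>2 + (norm (v - z))\<^sup>2 = - 2 * ((v' - v) \<bullet> (z' - z))"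
      unfolding power2_norm_eq_inner by (simp add: inner_diff_left inner_diff_right inner_commute algebra_simps)
    note nsq = this
    have "(ll z' v' - ll z v') - (ll z' v - ll z v) = (Df z' - Df z) \<bullet> (v' - v)
       + ((norm (v' - z'))\<^sup>2 - (norm (v' - z))\<^sup>2 - (norm (v - z'))\<^sup>2 + (norm (v - z))\<^sup>2) / (2 * \<gamma>)"
      unfolding ll_def by (simp add: inner_diff_left inner_diff_right diff_divide_distrib add_divide_distrib algebra_simps)
    also have "\<dots> = (Df z' - Df z) \<bullet> (v' - v) - ((v' - v) \<bullet> (z' - z)) / \<gamma>"
      unfolding nsq using gam by simp
    finally show ?thesis .
  qed
  show ?thesis
  proof -
    have "(fbe \<gamma> f Df g has_derivative D) (at y)"
      unfolding has_derivative_at_alt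
    proof (intro conjI blD allI impI)
      fix e :: real assume e: "e > 0"
      define K where "K = L + 1 / \<gamma>"
      have K: "K > 0" unfolding K_def using L0 gam by (simp add: add_nonneg_pos)
      obtain d1 where d1: "d1 > 0" "\<And>z. norm (z - y) < d1 \<Longrightarrow> norm (ll z u - ll y u - D (z - y)) \<le> e / 2 * norm (z - y)"
        using Dder e unfolding has_derivative_at_alt by (meson half_gt_zero)
      obtain d2 where d2: "d2 > 0" "\<And>z. dist z y < d2 \<Longrightarrow> dist (T z) (T y) < e / (2 * K)"
        using Tc e K unfolding continuous_at_eps_delta by (metis divide_pos_pos half_gt_zero mult_pos_pos zero_less_numeral)
      obtain d3 where d3: "d3 > 0" "ball y d3 \<subseteq> N" using N open_contains_ball by blast
      show "\<exists>d>0. \<forall>z. norm (z - y) < d \<longrightarrow> norm (fbe \<gamma> f Df g z - fbe \<gamma> f Df g y - D (z - y)) \<le> e * norm (z - y)"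
      proof (intro exI[of _ "min d1 (min d2 d3)"] conjI allI impI)
        show "min d1 (min d2 d3) > 0" using d1 d2 d3 by simp
        fix z assume z: "norm (z - y) < min d1 (min d2 d3)"
        have zN: "z \<in> N" using z d3 by (auto simp: dist_norm norm_minus_commute)
        have yN: "y \<in> N" by (rule N(2))
        have up: "fbe \<gamma> f Df g z - fbe \<gamma> f Df g y \<le> ll z u - ll y u"
          using fbe_le[OF zN yN] fbe_eq[OF yN] unfolding u_def by simp
        have lo: "ll z (T z) - ll y (T z) \<le> fbe \<gamma> f Df g z - fbe \<gamma> f Df g y"
          using fbe_le[OF yN zN] fbe_eq[OF zN] by simp
        have Tz: "norm (T z - u) < e / (2 * K)" using d2 z unfolding u_def by (auto simp: dist_norm)
        have "\<bar>(Df z - Df y) \<bullet> (T z - u) - ((T z - u) \<bullet> (z - y)) / \<gamma>\<bar> \<le> K * norm (z - y) * norm (T z - u)"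
        proof -
          have a1: "\<bar>(Df z - Df y) \<bullet> (T z - u)\<bar> \<le> L * norm (z - y) * norm (T z - u)"
          proof -
            have "\<bar>(Df z - Df y) \<bullet> (T z - u)\<bar> \<le> norm (Df z - Df y) * norm (T z - u)" by (rule Cauchy_Schwarz_ineq2)
            also have "norm (Df z - Df y) \<le> L * norm (z - y)"
              using lipschitz_onD[OF lip, of z y] by (simp add: dist_norm)
            then have "norm (Df z - Df y) * norm (T z - u) \<le> L * norm (z - y) * norm (T z - u)"
              by (simp add: mult_right_mono)
            finally show ?thesis .
          qed
          have a2: "\<bar>((T z - u) \<bullet> (z - y)) / \<gamma>\<bar> \<le> 1 / \<gamma> * norm (z - y) * norm (T z - u)"
            using Cauchy_Schwarz_ineq2[of "T z - u" "z - y"] gam by (simp add: field_simps abs_div)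
          have "\<bar>(Df z - Df y) \<bullet> (T z - u) - ((T z - u) \<bullet> (z - y)) / \<gamma>\<bar>
              \<le> \<bar>(Df z - Df y) \<bullet> (T z - u)\<bar> + \<bar>((T z - u) \<bullet> (z - y)) / \<gamma>\<bar>"
            by (rule abs_triangle_ineq4)
          also have "\<dots> \<le> L * norm (z - y) * norm (T z - u) + 1 / \<gamma> * norm (z - y) * norm (T z - u)"
            using a1 a2 by (rule add_mono)
          also have "\<dots> = K * norm (z - y) * norm (T z - u)" unfolding K_def by (simp add: algebra_simps)
          finally show ?thesis .
        qed
        also have "\<dots> \<le> K * norm (z - y) * (e / (2 * K))"
          using Tz K by (intro mult_left_mono) auto
        also have "\<dots> = e / 2 * norm (z - y)" using K by (simp add: field_simps)
        finally have mid: "\<bar>(Df z - Df y) \<bullet> (T z - u) - ((T z - u) \<bullet> (z - y)) / \<gamma>\<bar> \<le> e / 2 * norm (z - y)" .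
        have lin: "norm (ll z u - ll y u - D (z - y)) \<le> e / 2 * norm (z - y)" using d1 z by simp
        have idz: "(ll z (T z) - ll y (T z)) - (ll z u - ll y u) = (Df z - Df y) \<bullet> (T z - u) - ((T z - u) \<bullet> (z - y)) / \<gamma>"
          by (rule ident)
        show "norm (fbe \<gamma> f Df g z - fbe \<gamma> f Df g y - D (z - y)) \<le> e * norm (z - y)"
        proof -
          have m2: "\<bar>(ll z (T z) - ll y (T z)) - (ll z u - ll y u)\<bar> \<le> e / 2 * norm (z - y)"
            using mid unfolding idz .
          have l2: "\<bar>ll z u - ll y u - D (z - y)\<bar> \<le> e / 2 * norm (z - y)"
            using lin unfolding real_norm_def .
          have "\<bar>fbe \<gamma> f Df g z - fbe \<gamma> f Df g y - D (z - y)\<bar> \<le> e * norm (z - y)"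
            using up lo m2 l2 unfolding abs_le_iff by linarith
          then show ?thesis unfolding real_norm_def .
        qed
      qed
    qed
    then show ?thesis
      by (rule has_derivative_eq_rhs) (use gam in \<open>auto simp: D_def u_def fun_eq_iff inner_commute inner_diff_left inner_diff_right field_simps\<close>)
  qed
qed



lemma mbound: "\<exists>M>0. \<forall>h. norm (A *v h) \<le> M * norm h" for A :: "real^'n^'m"
  using bounded_linear.pos_bounded[OF matrix_vector_mul_bounded_linear[of A]]
  by (metis mult.commute)

lemma mclose_Q:
  assumes "mclose A A0 e" "\<gamma> > 0"
  shows "mclose (mat 1 - \<gamma> *\<^sub>R A) (mat 1 - \<gamma> *\<^sub>R A0) (\<gamma> * e)"
  unfolding mclose_def
proof
  fix h :: "real^'a"
  have "(mat 1 - \<gamma> *\<^sub>R A - (mat 1 - \<gamma> *\<^sub>R A0)) *v h = - (\<gamma> *\<^sub>R ((A - A0) *v h))"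
    by (simp add: matrix_vector_mult_diff_rdistrib scaleR_matrix_vector_assoc[symmetric] algebra_simps)
  then have "norm ((mat 1 - \<gamma> *\<^sub>R A - (mat 1 - \<gamma> *\<^sub>R A0)) *v h) = \<gamma> * norm ((A - A0) *v h)"
    using assms(2) by simp
  also have "\<dots> \<le> \<gamma> * (e * norm h)" using assms unfolding mclose_def by simp
  finally show "norm ((mat 1 - \<gamma> *\<^sub>R A - (mat 1 - \<gamma> *\<^sub>R A0)) *v h) \<le> \<gamma> * e * norm h" by simp
qed

lemma mclose_B:
  fixes Q0 P0 :: "real^'n^'n"
  assumes gam: "\<gamma> > 0" and e: "e > 0"
  shows "\<exists>e'>0. \<forall>Q P. mclose Q Q0 e' \<longrightarrow> mclose P P0 e' \<longrightarrow>
     mclose ((1 / \<gamma>) *\<^sub>R (Q ** (mat 1 - P ** Q))) ((1 / \<gamma>) *\<^sub>R (Q0 ** (mat 1 - P0 ** Q0))) e"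
proof -
  obtain Mq where Mq: "Mq > 0" "\<And>h. norm (Q0 *v h) \<le> Mq * norm h" using mbound by blast
  obtain Mp where Mp: "Mp > 0" "\<And>h. norm (P0 *v h) \<le> Mp * norm h" using mbound by blast
  define K where "K = (1 + (Mp + 1) * (Mq + 1)) + Mq * ((Mq + 1) + Mp)"
  have K: "K > 0" unfolding K_def using Mq Mp by (simp add: add_pos_pos)
  define e' where "e' = min 1 (\<gamma> * e / K)"
  have e': "e' > 0" "e' \<le> 1" "e' * K \<le> \<gamma> * e" unfolding e'_def using gam e K by (auto simp: min_def field_simps)
  show ?thesis
  proof (intro exI[of _ e'] conjI allI impI)
    show "e' > 0" by (rule e'(1))
    fix Q P :: "real^'n^'n" assume cQ: "mclose Q Q0 e'" and cP: "mclose P P0 e'"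
    show "mclose ((1 / \<gamma>) *\<^sub>R (Q ** (mat 1 - P ** Q))) ((1 / \<gamma>) *\<^sub>R (Q0 ** (mat 1 - P0 ** Q0))) e"
      unfolding mclose_def
    proof
      fix h :: "real^'n"
      have Qh: "norm (Q *v h) \<le> (Mq + 1) * norm h"
      proof -
        have "Q *v h = Q0 *v h + (Q - Q0) *v h" by (simp add: matrix_vector_mult_diff_rdistrib)
        then have "norm (Q *v h) \<le> norm (Q0 *v h) + norm ((Q - Q0) *v h)" by (metis norm_triangle_ineq)
        also have "\<dots> \<le> Mq * norm h + e' * norm h" using Mq(2) cQ unfolding mclose_def by (intro add_mono) auto
        also have "\<dots> \<le> (Mq + 1) * norm h" using mult_left_le_one_le[of "norm h" e'] e' by (simp add: algebra_simps)
        finally show ?thesis .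
      qed
      have Pv: "norm (P *v v) \<le> (Mp + 1) * norm v" for v
      proof -
        have "P *v v = P0 *v v + (P - P0) *v v" by (simp add: matrix_vector_mult_diff_rdistrib)
        then have "norm (P *v v) \<le> norm (P0 *v v) + norm ((P - P0) *v v)" by (metis norm_triangle_ineq)
        also have "\<dots> \<le> Mp * norm v + e' * norm v" using Mp(2) cP unfolding mclose_def by (intro add_mono) auto
        also have "\<dots> \<le> (Mp + 1) * norm v" using mult_left_le_one_le[of "norm v" e'] e' by (simp add: algebra_simps)
        finally show ?thesis .
      qed
      define a where "a = h - P *v (Q *v h)"
      define a0 where "a0 = h - P0 *v (Q0 *v h)"
      have na: "norm a \<le> (1 + (Mp + 1) * (Mq + 1)) * norm h"
      proof -
        have "norm a \<le> norm h + norm (P *v (Q *v h))" unfolding a_def by (rule norm_triangle_ineq4)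
        also have "norm (P *v (Q *v h)) \<le> (Mp + 1) * ((Mq + 1) * norm h)"
          using Pv[of "Q *v h"] Qh Mp(1) by (meson add_nonneg_nonneg less_imp_le mult_left_mono order_trans zero_le_one)
        finally show ?thesis by (simp add: algebra_simps)
      qed
      have naa: "norm (a - a0) \<le> e' * ((Mq + 1) + Mp) * norm h"
      proof -
        have "a - a0 = - ((P - P0) *v (Q *v h) + P0 *v ((Q - Q0) *v h))"
          unfolding a_def a0_def by (simp add: matrix_vector_mult_diff_rdistrib matrix_vector_mult_diff_distrib algebra_simps)
        then have "norm (a - a0) \<le> norm ((P - P0) *v (Q *v h)) + norm (P0 *v ((Q - Q0) *v h))"
          by (metis norm_minus_cancel norm_triangle_ineq)
        also have "norm ((P - P0) *v (Q *v h)) \<le> e' * ((Mq + 1) * norm h)"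
          using cP Qh e'(1) unfolding mclose_def by (meson mult_left_mono less_imp_le order_trans)
        also have "norm (P0 *v ((Q - Q0) *v h)) \<le> Mp * (e' * norm h)"
          using Mp cQ unfolding mclose_def by (meson mult_left_mono less_imp_le order_trans)
        finally show ?thesis by (simp add: algebra_simps)
      qed
      have diff: "((1 / \<gamma>) *\<^sub>R (Q ** (mat 1 - P ** Q)) - (1 / \<gamma>) *\<^sub>R (Q0 ** (mat 1 - P0 ** Q0))) *v h
          = (1 / \<gamma>) *\<^sub>R ((Q - Q0) *v a + Q0 *v (a - a0))"
        unfolding a_def a0_def
        by (simp add: matrix_vector_mult_diff_rdistrib matrix_vector_mult_diff_distrib
             scaleR_matrix_vector_assoc[symmetric] matrix_vector_mul_assoc[symmetric] matrix_vector_right_distrib algebra_simps)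
      have "norm ((Q - Q0) *v a + Q0 *v (a - a0)) \<le> norm ((Q - Q0) *v a) + norm (Q0 *v (a - a0))"
        by (rule norm_triangle_ineq)
      also have "\<dots> \<le> e' * ((1 + (Mp + 1) * (Mq + 1)) * norm h) + Mq * (e' * ((Mq + 1) + Mp) * norm h)"
      proof (rule add_mono)
        show "norm ((Q - Q0) *v a) \<le> e' * ((1 + (Mp + 1) * (Mq + 1)) * norm h)"
          using cQ na e'(1) unfolding mclose_def by (meson mult_left_mono less_imp_le order_trans)
        show "norm (Q0 *v (a - a0)) \<le> Mq * (e' * (Mq + 1 + Mp) * norm h)"
          using Mq naa by (meson mult_left_mono less_imp_le order_trans)
      qed
      also have "\<dots> = (e' * K) * norm h" unfolding K_def by (simp add: algebra_simps)
      also have "\<dots> \<le> (\<gamma> * e) * norm h" using e'(3) by (simp add: mult_right_mono)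
      finally have "norm ((Q - Q0) *v a + Q0 *v (a - a0)) \<le> \<gamma> * e * norm h" .
      then show "norm (((1 / \<gamma>) *\<^sub>R (Q ** (mat 1 - P ** Q)) - (1 / \<gamma>) *\<^sub>R (Q0 ** (mat 1 - P0 ** Q0))) *v h) \<le> e * norm h"
        unfolding diff norm_scaleR using gam by (simp add: field_simps)
    qed
  qed
qed

lemma pd_close:
  assumes "mclose B H e" "\<And>h. c * (norm h)\<^sup>2 \<le> h \<bullet> (H *v h)"
  shows "(c - e) * (norm h)\<^sup>2 \<le> h \<bullet> (B *v h)"
proof -
  have "h \<bullet> (B *v h) = h \<bullet> (H *v h) + h \<bullet> ((B - H) *v h)"
    by (simp add: matrix_vector_mult_diff_rdistrib inner_diff_right)
  moreover have "\<bar>h \<bullet> ((B - H) *v h)\<bar> \<le> e * (norm h)\<^sup>2"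
  proof -
    have "\<bar>h \<bullet> ((B - H) *v h)\<bar> \<le> norm h * norm ((B - H) *v h)" by (rule Cauchy_Schwarz_ineq2)
    also have "\<dots> \<le> norm h * (e * norm h)" using assms(1) unfolding mclose_def by (simp add: mult_left_mono)
    finally show ?thesis by (simp add: power2_eq_square algebra_simps)
  qed
  ultimately show ?thesis using assms(2)[of h] by (simp add: algebra_simps abs_le_iff)
qed

lemma pd_norm:
  fixes B :: "real^'n^'n"
  assumes "\<And>h. c * (norm h)\<^sup>2 \<le> h \<bullet> (B *v h)" "c > 0"
  shows "norm u \<le> (1 / c) * norm (B *v u)"
proof -
  have "c * (norm u)\<^sup>2 \<le> norm u * norm (B *v u)"
    using assms(1)[of u] Cauchy_Schwarz_ineq2[of u "B *v u"] by linarith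
  then have "c * norm u \<le> norm (B *v u)"
    by (cases "norm u = 0") (auto simp: power2_eq_square mult.assoc)
  then show ?thesis using assms(2) by (simp add: field_simps)
qed

lemma pd_inv:
  fixes B :: "real^'n^'n"
  assumes "\<And>h. c * (norm h)\<^sup>2 \<le> h \<bullet> (B *v h)" "c > 0"
  shows "B *v (matrix_inv B *v v) = v"
proof -
  have "\<forall>x. B *v x = 0 \<longrightarrow> x = 0"
    using pd_norm[OF assms] by (metis norm_eq_zero norm_zero mult_zero_right order_antisym norm_ge_zero)
  then obtain B' where "B' ** B = mat 1" using matrix_left_invertible_ker by blast
  then have "B ** B' = mat 1 \<and> B' ** B = mat 1" using matrix_left_right_inverse by blast
  then have "B ** matrix_inv B = mat 1 \<and> matrix_inv B ** B = mat 1"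
    unfolding matrix_inv_def by (rule someI)
  then show ?thesis by (simp add: matrix_vector_mul_assoc)
qed

lemma path_deriv_gen:
  assumes "(F has_derivative D) (at (x + t *\<^sub>R v))"
  shows "((\<lambda>t. F (x + t *\<^sub>R v)) has_real_derivative D v) (at t)"
proof -
  have "((\<lambda>t. x + t *\<^sub>R v) has_derivative (\<lambda>s. s *\<^sub>R v)) (at t)"
    by (auto intro!: derivative_eq_intros)
  from has_derivative_compose[OF this assms]
  have d: "((\<lambda>t. F (x + t *\<^sub>R v)) has_derivative (\<lambda>s. D (s *\<^sub>R v))) (at t)" by (simp add: o_def)
  have l: "linear D" using assms has_derivative_linear by blast
  show ?thesis
    unfolding has_field_derivative_def
    by (rule has_derivative_eq_rhs[OF d]) (auto simp: fun_eq_iff linear_cmul[OF l] mult.commute)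
qed

lemma sq_tri: "(norm (a + b))\<^sup>2 \<le> 2 * (norm a)\<^sup>2 + 2 * (norm b)\<^sup>2" for a b :: "'a::real_normed_vector"
proof -
  have "norm (a + b) \<le> norm a + norm b" by (rule norm_triangle_ineq)
  then have "(norm (a + b))\<^sup>2 \<le> (norm a + norm b)\<^sup>2" by (simp add: power_mono)
  also have "\<dots> \<le> 2 * (norm a)\<^sup>2 + 2 * (norm b)\<^sup>2"
  proof -
    have "0 \<le> (norm a - norm b) * (norm a - norm b)" by simp
    then show ?thesis by (simp add: power2_eq_square algebra_simps)
  qed
  finally show ?thesis .
qed



theorem theorem5p5:
  fixes f :: "real^'n \<Rightarrow> real" and Df :: "real^'n \<Rightarrow> real^'n" and L :: real
    and g :: "real^'n \<Rightarrow> ereal" and \<gamma>g :: ereal and \<rho> :: real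
    and \<gamma> \<sigma> \<beta> \<mu> :: real
    and x xb r rb d s :: "nat \<Rightarrow> real^'n"
    and Q P B :: "nat \<Rightarrow> real^'n^'n" and \<tau> :: "nat \<Rightarrow> real"
    and xs :: "real^'n"
  assumes f_grad: "\<And>y. GDERIV f y :> Df y"
    and L_pos: "0 < L" and Df_lip: "L-lipschitz_on UNIV Df"
    and g_proper: "proper_fun g" and g_lsc: "lsc_fun g"
    and \<gamma>g_pos: "0 < \<gamma>g" and g_pb: "prox_bounded \<gamma>g g"
    and g_wc: "weakly_convex \<rho> g"
    and argmin_ne: "\<exists>z. \<forall>y. ereal (f z) + g z \<le> ereal (f y) + g y"
    and \<gamma>_pos: "0 < \<gamma>" and \<gamma>_L: "\<gamma> < 1 / L" and \<gamma>_g: "ereal \<gamma> < \<gamma>g"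
    and \<sigma>_pos: "0 < \<sigma>" and \<sigma>_bd: "\<sigma> < \<gamma> * (1 - \<gamma> * L) / 2"
    and \<beta>_bds: "0 < \<beta>" "\<beta> < 1" and \<mu>_bds: "0 < \<mu>" "\<mu> < 1"
    \<comment> \<open>the PGCL iteration (it never stops, since it generates an infinite sequence)\<close>
    and xb_sel: "\<And>k. xb k \<in> fb_op \<gamma> Df g (x k)"
    and r_def: "\<And>k. r k = (1 / \<gamma>) *\<^sub>R (x k - xb k)"
    and rb_sel: "\<And>k. rb k \<in> fb_res \<gamma> Df g (xb k)"
    and Q_sel: "\<And>k. \<exists>A \<in> clarke_jac Df (xb k). Q k = mat 1 - \<gamma> *\<^sub>R A"
    and P_sel: "\<And>k. P k \<in> clarke_jac_sv (prox \<gamma> g) (xb k - \<gamma> *\<^sub>R Df (xb k))"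
    and B_def: "\<And>k. B k = (1 / \<gamma>) *\<^sub>R (Q k ** (mat 1 - P k ** Q k))"
    and no_stop: "\<And>k. \<not> (rb k = 0 \<and> lambda_min (B k) \<ge> 0)"
    and d_dir: "\<And>k. inner (Q k *v rb k) (d k) \<le> 0"
    and s_dir: "\<And>k. inner (Q k *v rb k) (s k) \<le> 0"
    and s_neg: "\<And>k. lambda_min (B k) < 0 \<Longrightarrow> inner (B k *v s k) (s k) < 0"
    and s_zero: "\<And>k. \<not> lambda_min (B k) < 0 \<Longrightarrow> inner (B k *v s k) (s k) = 0"
    and ls: "\<And>k. \<exists>m::nat. \<tau> k = \<beta> ^ m
       \<and> fbe \<gamma> f Df g (xb k + (\<beta> ^ m)\<^sup>2 *\<^sub>R d k + \<beta> ^ m *\<^sub>R s k)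
           \<le> fbe \<gamma> f Df g (x k) - \<sigma> * (norm (r k))\<^sup>2
              + \<mu> / 2 * (\<beta> ^ m)\<^sup>2 * inner (B k *v s k) (s k)
       \<and> (\<forall>m'<m. \<not> (fbe \<gamma> f Df g (xb k + (\<beta> ^ m')\<^sup>2 *\<^sub>R d k + \<beta> ^ m' *\<^sub>R s k)
           \<le> fbe \<gamma> f Df g (x k) - \<sigma> * (norm (r k))\<^sup>2
              + \<mu> / 2 * (\<beta> ^ m')\<^sup>2 * inner (B k *v s k) (s k)))"
    and x_next: "\<And>k. x (Suc k) = xb k + (\<tau> k)\<^sup>2 *\<^sub>R d k + \<tau> k *\<^sub>R s k"
    \<comment> \<open>convergence to a strong local minimizer with local smoothness\<close>
    and xb_lim: "xb \<longlonglongrightarrow> xs"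
    and xs_slm: "strong_local_min (\<lambda>y. ereal (f y) + g y) xs"
    and f_C3: "\<exists>U. open U \<and> xs \<in> U \<and> C3_on U f"
    and prox_C1: "\<exists>U p. open U \<and> xs - \<gamma> *\<^sub>R Df xs \<in> U
                     \<and> (\<forall>z\<in>U. prox \<gamma> g z = {p z}) \<and> C1_on U p"
    \<comment> \<open>Newton directions eventually\<close>
    and d_newton: "eventually (\<lambda>k. \<exists>v. GDERIV (fbe \<gamma> f Df g) (xb k) :> v
                       \<and> d k = - (matrix_inv (B k) *v v)) sequentially"
  shows "eventually (\<lambda>k. \<tau> k = 1) sequentially
         \<and> superlinear_conv x xs \<and> superlinear_conv xb xs \<and> superlinear_conv r 0"
proof -
  have L0: "0 \<le> L" using L_pos by simp
  have gL: "\<gamma> * L < 1" using \<gamma>_L L_pos \<gamma>_pos by (simp add: field_simps)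
  define a where "a = 1 / (2 * \<gamma>) - L / 2"
  have a_eq: "a = (1 - \<gamma> * L) / (2 * \<gamma>)" unfolding a_def using \<gamma>_pos by (simp add: field_simps)
  have a_pos: "a > 0" unfolding a_eq using gL \<gamma>_pos by simp
  have sig_a: "\<sigma> / \<gamma>\<^sup>2 \<le> a"
  proof -
    have "\<sigma> / \<gamma>\<^sup>2 \<le> (\<gamma> * (1 - \<gamma> * L) / 2) / \<gamma>\<^sup>2"
      using \<sigma>_bd \<gamma>_pos by (intro divide_right_mono) auto
    also have "\<dots> = a" unfolding a_eq using \<gamma>_pos by (simp add: power2_eq_square field_simps)
    finally show ?thesis .
  qed
  have r_norm: "(norm (r k))\<^sup>2 = (norm (xb k - x k))\<^sup>2 / \<gamma>\<^sup>2" for k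
    unfolding r_def using \<gamma>_pos by (simp add: power_divide norm_minus_commute)
  have sig_r: "\<sigma> * (norm (r k))\<^sup>2 \<le> a * (norm (xb k - x k))\<^sup>2" for k
  proof -
    have "\<sigma> * (norm (r k))\<^sup>2 = (\<sigma> / \<gamma>\<^sup>2) * (norm (xb k - x k))\<^sup>2" unfolding r_norm by simp
    also have "\<dots> \<le> a * (norm (xb k - x k))\<^sup>2" by (rule mult_right_mono[OF sig_a]) simp
    finally show ?thesis .
  qed
  have Bss: "inner (B k *v s k) (s k) \<le> 0" for k
    using s_neg[of k] s_zero[of k] by (cases "lambda_min (B k) < 0") auto
  have dec: "fbe \<gamma> f Df g (x (Suc k)) \<le> fbe \<gamma> f Df g (x k) - \<sigma> * (norm (r k))\<^sup>2" for k
  proof -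
    obtain m where m: "\<tau> k = \<beta> ^ m"
      "fbe \<gamma> f Df g (xb k + (\<beta> ^ m)\<^sup>2 *\<^sub>R d k + \<beta> ^ m *\<^sub>R s k)
           \<le> fbe \<gamma> f Df g (x k) - \<sigma> * (norm (r k))\<^sup>2
              + \<mu> / 2 * (\<beta> ^ m)\<^sup>2 * inner (B k *v s k) (s k)"
      using ls[of k] by blast
    have "\<mu> / 2 * (\<beta> ^ m)\<^sup>2 * inner (B k *v s k) (s k) \<le> 0"
      using Bss[of k] \<mu>_bds by (intro mult_nonneg_nonpos) auto
    then show ?thesis using m x_next[of k] by simp
  qed
  have phi_le: "ereal (f (xb k)) + g (xb k) \<le> ereal (fbe \<gamma> f Df g (x k) - \<sigma> * (norm (r k))\<^sup>2)" for k
  proof -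
    have "ereal (f (xb k)) + g (xb k) \<le> ereal (fbe \<gamma> f Df g (x k) - a * (norm (xb k - x k))\<^sup>2)"
      using suff_dec(1)[OF f_grad Df_lip g_proper \<gamma>_pos xb_sel[of k]] unfolding a_def .
    also have "\<dots> \<le> ereal (fbe \<gamma> f Df g (x k) - \<sigma> * (norm (r k))\<^sup>2)" using sig_r[of k] by simp
    finally show ?thesis .
  qed
  obtain m0 where m0: "\<And>k. m0 \<le> fbe \<gamma> f Df g (x k)"
  proof -
    obtain z0 where z0: "\<forall>y. ereal (f z0) + g z0 \<le> ereal (f y) + g y" using argmin_ne by blast
    have le: "ereal (f z0) + g z0 \<le> ereal (fbe \<gamma> f Df g (x k))" for k
    proof -
      have "ereal (f z0) + g z0 \<le> ereal (f (xb k)) + g (xb k)" using z0 by blast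
      also have "\<dots> \<le> ereal (fbe \<gamma> f Df g (x k) - \<sigma> * (norm (r k))\<^sup>2)" by (rule phi_le)
      also have "\<dots> \<le> ereal (fbe \<gamma> f Df g (x k))" using \<sigma>_pos by simp
      finally show ?thesis .
    qed
    have "g z0 \<noteq> -\<infinity>" using g_proper unfolding proper_fun_def by blast
    moreover have "g z0 \<noteq> \<infinity>" using le[of 0] by auto
    ultimately obtain gz where gz: "g z0 = ereal gz" by (cases "g z0") auto
    show ?thesis using le gz that[of "f z0 + gz"] by simp
  qed
  define Fk where "Fk k = fbe \<gamma> f Df g (x k)" for k
  have Fdec: "decseq Fk"
    unfolding Fk_def by (rule decseq_SucI) (use dec \<sigma>_pos in \<open>smt (verit) mult_nonneg_nonneg zero_le_power2\<close>)
  obtain Flim where Flim: "Fk \<longlonglongrightarrow> Flim"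
    using decseq_convergent[OF Fdec, of m0] m0 unfolding Fk_def by blast
  have Fdiff: "(\<lambda>k. Fk k - Fk (Suc k)) \<longlonglongrightarrow> 0"
    using tendsto_diff[OF Flim LIMSEQ_Suc[OF Flim]] by simp
  have rsq: "(\<lambda>k. (norm (r k))\<^sup>2) \<longlonglongrightarrow> 0"
  proof (rule tendsto_sandwich[of "\<lambda>_. 0" _ _ "\<lambda>k. (Fk k - Fk (Suc k)) / \<sigma>"])
    show "\<forall>\<^sub>F n in sequentially. 0 \<le> (norm (r n))\<^sup>2" by simp
    show "\<forall>\<^sub>F n in sequentially. (norm (r n))\<^sup>2 \<le> (Fk n - Fk (Suc n)) / \<sigma>"
      using dec \<sigma>_pos unfolding Fk_def by (simp add: field_simps mult.commute)
    show "(\<lambda>k. (Fk k - Fk (Suc k)) / \<sigma>) \<longlonglongrightarrow> 0" using tendsto_divide[OF Fdiff tendsto_const, of \<sigma>] \<sigma>_pos by simp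
  qed simp
  have r_lim: "r \<longlonglongrightarrow> 0"
  proof -
    have "(\<lambda>k. sqrt ((norm (r k))\<^sup>2)) \<longlonglongrightarrow> sqrt 0" by (rule tendsto_real_sqrt[OF rsq])
    then have "(\<lambda>k. norm (r k)) \<longlonglongrightarrow> 0" by simp
    then show ?thesis by (simp add: tendsto_norm_zero_iff)
  qed
  have x_eq: "x k = xb k + \<gamma> *\<^sub>R r k" for k unfolding r_def using \<gamma>_pos by simp
  have x_lim: "x \<longlonglongrightarrow> xs"
  proof -
    have "(\<lambda>k. xb k + \<gamma> *\<^sub>R r k) \<longlonglongrightarrow> xs + \<gamma> *\<^sub>R 0"
      by (intro tendsto_intros xb_lim r_lim)
    then show ?thesis unfolding x_eq[symmetric] by simp
  qed
  (* local smoothness data *)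
  obtain V where V: "open V" "xs \<in> V" "C3_on V f" using f_C3 by blast
  obtain J where J: "\<And>y. y \<in> V \<Longrightarrow> (Df has_derivative (*v) (J y)) (at y)"
    "\<And>y e. y \<in> V \<Longrightarrow> e > 0 \<Longrightarrow> \<exists>d>0. \<forall>y'. norm (y' - y) < d \<longrightarrow> y' \<in> V \<and> mclose (J y') (J y) e"
    using C3_matrix[OF f_grad V(1) V(3)] by metis
  have JC: "\<exists>d>0. \<forall>y'. norm (y' - xs) < d \<longrightarrow> y' \<in> V \<and> mclose (J y') (J xs) e" if "e > 0" for e
    using J(2)[OF V(2) that] .
  define zs where "zs = xs - \<gamma> *\<^sub>R Df xs"
  obtain U p where U: "open U" "zs \<in> U" "\<And>z. z \<in> U \<Longrightarrow> prox \<gamma> g z = {p z}" "C1_on U p"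
    using prox_C1 unfolding zs_def by blast
  obtain Jp where Jp: "\<And>z. z \<in> U \<Longrightarrow> (p has_derivative (*v) (Jp z)) (at z)"
    "\<And>z e. z \<in> U \<Longrightarrow> e > 0 \<Longrightarrow> \<exists>d>0. \<forall>z'. norm (z' - z) < d \<longrightarrow> z' \<in> U \<and> mclose (Jp z') (Jp z) e"
    using C1_matrix[OF U(1) U(4)] by metis
  have JpC: "\<exists>d>0. \<forall>z'. norm (z' - zs) < d \<longrightarrow> z' \<in> U \<and> mclose (Jp z') (Jp zs) e" if "e > 0" for e
    using Jp(2)[OF U(2) that] .
  obtain dV where dV: "dV > 0" "\<And>y. norm (y - xs) < dV \<Longrightarrow> y \<in> V" using JC[of 1] by auto
  obtain dU where dU: "dU > 0" "\<And>z. norm (z - zs) < dU \<Longrightarrow> z \<in> U" using JpC[of 1] by auto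
  define w where "w y = y - \<gamma> *\<^sub>R Df y" for y
  have w_lip: "norm (w y - w y') \<le> (1 + \<gamma> * L) * norm (y - y')" for y y'
  proof -
    have "w y - w y' = (y - y') - \<gamma> *\<^sub>R (Df y - Df y')" unfolding w_def by (simp add: algebra_simps)
    then have "norm (w y - w y') \<le> norm (y - y') + \<gamma> * norm (Df y - Df y')"
      using \<gamma>_pos by (metis abs_of_pos norm_scaleR norm_triangle_ineq4)
    also have "norm (Df y - Df y') \<le> L * norm (y - y')"
      using lipschitz_onD[OF Df_lip, of y y'] by (simp add: dist_norm)
    then have "norm (y - y') + \<gamma> * norm (Df y - Df y') \<le> norm (y - y') + \<gamma> * (L * norm (y - y'))"
      using \<gamma>_pos by simp
    finally show ?thesis by (simp add: algebra_simps)
  qed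
  have wxs: "w xs = zs" unfolding w_def zs_def ..
  have gLp: "1 + \<gamma> * L > 0" using \<gamma>_pos L0 by (simp add: add_pos_nonneg)
  have w_cont: "isCont w y" for y
  proof -
    have "continuous_on UNIV Df" using Df_lip lipschitz_on_continuous_on by blast
    then have "isCont Df y" by (simp add: continuous_on_eq_continuous_at)
    then show ?thesis unfolding w_def by (intro continuous_intros)
  qed
  define Tp where "Tp y = p (w y)" for y
  define dW where "dW = min dV (dU / (1 + \<gamma> * L))"
  have dW: "dW > 0" unfolding dW_def using dV dU gLp by simp
  have near: "y \<in> V \<and> w y \<in> U \<and> fb_op \<gamma> Df g y = {Tp y}" if "norm (y - xs) < dW" for y
  proof -
    have "norm (w y - zs) \<le> (1 + \<gamma> * L) * norm (y - xs)" using w_lip[of y xs] wxs by simp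
    also have "\<dots> < (1 + \<gamma> * L) * (dU / (1 + \<gamma> * L))"
      using that gLp unfolding dW_def by (intro mult_strict_left_mono) auto
    also have "\<dots> = dU" using gLp by simp
    finally have "w y \<in> U" using dU by blast
    moreover have "y \<in> V" using that dV unfolding dW_def by auto
    ultimately show ?thesis unfolding fb_op_def Tp_def w_def[symmetric] using U(3) by simp
  qed
  have Tp_cont: "isCont Tp y" if "norm (y - xs) < dW" for y
  proof -
    have "isCont p (w y)" using Jp(1) near[OF that] has_derivative_continuous by blast
    then show ?thesis unfolding Tp_def using w_cont continuous_at_compose[of y w p] by (simp add: o_def)
  qed
  have ev_near: "eventually (\<lambda>k. norm (y k - xs) < dW) sequentially" if "y \<longlonglongrightarrow> xs" for y
    using eventually_in_ball[OF that, of xs dW] dW by simp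
  have xb_T: "eventually (\<lambda>k. xb k = Tp (x k)) sequentially"
    using ev_near[OF x_lim] by eventually_elim (use near xb_sel in auto)
  have Tp_xs: "Tp xs = xs"
  proof -
    have "(\<lambda>k. Tp (x k)) \<longlonglongrightarrow> Tp xs" using isCont_tendsto_compose[OF Tp_cont x_lim] dW by simp
    moreover have "(\<lambda>k. Tp (x k)) \<longlonglongrightarrow> xs" using xb_lim tendsto_cong[OF xb_T] by simp
    ultimately show ?thesis using LIMSEQ_unique by blast
  qed
  define Q0 where "Q0 = mat 1 - \<gamma> *\<^sub>R J xs"
  define P0 where "P0 = Jp zs"
  define A0 where "A0 = (1 / \<gamma>) *\<^sub>R (mat 1 - P0 ** Q0)"
  define H where "H = (1 / \<gamma>) *\<^sub>R (Q0 ** (mat 1 - P0 ** Q0))"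
  have H_A0: "H *v v = Q0 *v (A0 *v v)" for v
    unfolding H_def A0_def by (simp add: matrix_vector_mul_assoc[symmetric] scaleR_matrix_vector_assoc[symmetric] matrix_vector_mult_scaleR)
  have Tp_der: "(Tp has_derivative (*v) (P0 ** Q0)) (at xs)"
  proof -
    have "(w has_derivative (\<lambda>h. h - \<gamma> *\<^sub>R (J xs *v h))) (at xs)"
      unfolding w_def using J(1)[OF V(2)] by (auto intro!: derivative_eq_intros)
    moreover have "(\<lambda>h. h - \<gamma> *\<^sub>R (J xs *v h)) = (*v) Q0"
      unfolding Q0_def by (simp add: fun_eq_iff matrix_vector_mult_diff_rdistrib scaleR_matrix_vector_assoc)
    ultimately have dw: "(w has_derivative (*v) Q0) (at xs)" by simp
    have dp: "(p has_derivative (*v) P0) (at (w xs))" unfolding P0_def wxs using Jp(1)[OF U(2)] .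
    show ?thesis unfolding Tp_def using has_derivative_compose[OF dw dp]
      by (simp add: o_def matrix_vector_mul_assoc)
  qed
  define R where "R y = (1 / \<gamma>) *\<^sub>R (y - Tp y)" for y
  have RE: "\<exists>d>0. \<forall>y. norm (y - xs) < d \<longrightarrow> norm (R y - A0 *v (y - xs)) \<le> e * norm (y - xs)" if e: "e > 0" for e
  proof -
    obtain d where d: "d > 0" "\<forall>y. norm (y - xs) < d \<longrightarrow> norm (Tp y - Tp xs - (P0 ** Q0) *v (y - xs)) \<le> (e * \<gamma>) * norm (y - xs)"
      using Tp_der e \<gamma>_pos unfolding has_derivative_at_alt by (meson mult_pos_pos)
    show ?thesis
    proof (intro exI[of _ d] conjI allI impI)
      fix y assume y: "norm (y - xs) < d"
      have "R y - A0 *v (y - xs) = - ((1 / \<gamma>) *\<^sub>R (Tp y - Tp xs - (P0 ** Q0) *v (y - xs)))"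
        unfolding R_def A0_def Tp_xs
        by (simp add: scaleR_matrix_vector_assoc[symmetric] matrix_vector_mult_diff_rdistrib algebra_simps)
      then have "norm (R y - A0 *v (y - xs)) = (1 / \<gamma>) * norm (Tp y - Tp xs - (P0 ** Q0) *v (y - xs))"
        using \<gamma>_pos by simp
      also have "\<dots> \<le> (1 / \<gamma>) * ((e * \<gamma>) * norm (y - xs))" using d y \<gamma>_pos by (intro mult_left_mono) auto
      also have "\<dots> = e * norm (y - xs)" using \<gamma>_pos by simp
      finally show "norm (R y - A0 *v (y - xs)) \<le> e * norm (y - xs)" .
    qed (use d in auto)
  qed
  obtain MA where MA: "MA > 0" "\<And>h. norm (A0 *v h) \<le> MA * norm h" using mbound by blast
  obtain MQ where MQ: "MQ > 0" "\<And>h. norm (Q0 *v h) \<le> MQ * norm h" using mbound by blast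
  obtain dR where dR: "dR > 0" "\<And>y. norm (y - xs) < dR \<Longrightarrow> norm (R y - A0 *v (y - xs)) \<le> 1 * norm (y - xs)"
    using RE[of 1] by auto
  define CR where "CR = MA + 1"
  have CR: "CR > 0" unfolding CR_def using MA by simp
  have RB: "norm (R y) \<le> CR * norm (y - xs)" if "norm (y - xs) < dR" for y
  proof -
    have "norm (R y) \<le> norm (A0 *v (y - xs)) + norm (R y - A0 *v (y - xs))" by (rule norm_triangle_sub)
    also have "\<dots> \<le> MA * norm (y - xs) + 1 * norm (y - xs)" using MA(2) dR(2)[OF that] by (rule add_mono)
    finally show ?thesis unfolding CR_def by (simp add: algebra_simps)
  qed
  define Lam where "Lam = 1 + \<gamma> * CR"
  have Lam: "Lam > 0" unfolding Lam_def using CR \<gamma>_pos by (simp add: add_pos_pos)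
  have Tp_lip: "norm (Tp y - xs) \<le> Lam * norm (y - xs)" if "norm (y - xs) < dR" for y
  proof -
    have "Tp y - xs = (y - xs) - \<gamma> *\<^sub>R R y" unfolding R_def using \<gamma>_pos by simp
    then have "norm (Tp y - xs) \<le> norm (y - xs) + \<gamma> * norm (R y)" using \<gamma>_pos by (metis abs_of_pos norm_scaleR norm_triangle_ineq4)
    also have "\<dots> \<le> norm (y - xs) + \<gamma> * (CR * norm (y - xs))" using RB[OF that] \<gamma>_pos by simp
    finally show ?thesis unfolding Lam_def by (simp add: algebra_simps)
  qed
  have sym: "(J xs *v k) \<bullet> h = (J xs *v h) \<bullet> k" for h k
  proof (rule hess_sym[OF f_grad, where \<delta> = dV])
    show "\<And>y. norm (y - xs) < dV \<Longrightarrow> (Df has_derivative (*v) (J y)) (at y)" using J(1) dV by blast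
    show "\<And>e. e > 0 \<Longrightarrow> \<exists>d>0. \<forall>y. norm (y - xs) < d \<longrightarrow> mclose (J y) (J xs) e" using JC by blast
  qed (rule dV(1))
  have grad: "(fbe \<gamma> f Df g has_derivative (\<lambda>h. R y \<bullet> h - \<gamma> * ((J y *v h) \<bullet> R y))) (at y)"
    if y: "norm (y - xs) < dW" for y
    unfolding R_def
  proof (rule fbe_deriv[OF f_grad Df_lip g_proper \<gamma>_pos, where N = "ball xs dW"])
    show "open (ball xs dW)" by simp
    show "y \<in> ball xs dW" using y by (simp add: dist_norm norm_minus_commute)
    show "\<And>y'. y' \<in> ball xs dW \<Longrightarrow> fb_op \<gamma> Df g y' = {Tp y'}" using near by (simp add: dist_norm norm_minus_commute)
    show "isCont Tp y" by (rule Tp_cont[OF y])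
    show "(Df has_derivative (*v) (J y)) (at y)" using J(1) near[OF y] by blast
  qed
  have GE: "\<exists>d>0. \<forall>y h. norm (y - xs) < d \<longrightarrow>
      \<bar>R y \<bullet> h - \<gamma> * ((J y *v h) \<bullet> R y) - (H *v (y - xs)) \<bullet> h\<bar> \<le> e * norm (y - xs) * norm h" if e: "e > 0" for e
  proof -
    obtain d1 where d1: "d1 > 0" "\<forall>y. norm (y - xs) < d1 \<longrightarrow> norm (R y - A0 *v (y - xs)) \<le> (e / (2 * MQ)) * norm (y - xs)"
      using RE[of "e / (2 * MQ)"] e MQ by auto
    obtain d2 where d2: "d2 > 0" "\<forall>y'. norm (y' - xs) < d2 \<longrightarrow> y' \<in> V \<and> mclose (J y') (J xs) (e / (2 * \<gamma> * CR))"
      using JC[of "e / (2 * \<gamma> * CR)"] e \<gamma>_pos CR by auto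
    show ?thesis
    proof (intro exI[of _ "min d1 (min d2 dR)"] conjI allI impI)
      show "min d1 (min d2 dR) > 0" using d1 d2 dR by simp
      fix y h assume y: "norm (y - xs) < min d1 (min d2 dR)"
      have split: "R y \<bullet> h - \<gamma> * ((J y *v h) \<bullet> R y) - (H *v (y - xs)) \<bullet> h
          = (Q0 *v (R y - A0 *v (y - xs))) \<bullet> h + \<gamma> * (((J xs - J y) *v h) \<bullet> R y)"
      proof -
        have "(J xs *v h) \<bullet> R y = (J xs *v R y) \<bullet> h" by (rule sym)
        then show ?thesis unfolding H_A0 Q0_def
          by (simp add: matrix_vector_mult_diff_rdistrib matrix_vector_mult_diff_distrib inner_diff_left inner_diff_right
              scaleR_matrix_vector_assoc[symmetric] algebra_simps)
      qed
      have t1: "\<bar>(Q0 *v (R y - A0 *v (y - xs))) \<bullet> h\<bar> \<le> e / 2 * norm (y - xs) * norm h"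
      proof -
        have "\<bar>(Q0 *v (R y - A0 *v (y - xs))) \<bullet> h\<bar> \<le> norm (Q0 *v (R y - A0 *v (y - xs))) * norm h"
          by (rule Cauchy_Schwarz_ineq2)
        also have "norm (Q0 *v (R y - A0 *v (y - xs))) \<le> MQ * ((e / (2 * MQ)) * norm (y - xs))"
          using MQ d1 y by (meson min.strict_boundedE mult_left_mono less_imp_le order_trans)
        then have "norm (Q0 *v (R y - A0 *v (y - xs))) * norm h \<le> MQ * ((e / (2 * MQ)) * norm (y - xs)) * norm h"
          by (simp add: mult_right_mono)
        also have "\<dots> = e / 2 * norm (y - xs) * norm h" using MQ by simp
        finally show ?thesis .
      qed
      have t2: "\<bar>\<gamma> * (((J xs - J y) *v h) \<bullet> R y)\<bar> \<le> e / 2 * norm (y - xs) * norm h"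
      proof -
        have cl: "mclose (J y) (J xs) (e / (2 * \<gamma> * CR))" using d2 y by auto
        have "norm ((J xs - J y) *v h) = norm ((J y - J xs) *v h)"
          by (metis minus_diff_eq norm_minus_cancel matrix_vector_mult_diff_rdistrib)
        also have "\<dots> \<le> (e / (2 * \<gamma> * CR)) * norm h" using cl unfolding mclose_def by blast
        finally have n1: "norm ((J xs - J y) *v h) \<le> (e / (2 * \<gamma> * CR)) * norm h" .
        have "\<bar>\<gamma> * (((J xs - J y) *v h) \<bullet> R y)\<bar> \<le> \<gamma> * (norm ((J xs - J y) *v h) * norm (R y))"
          using \<gamma>_pos Cauchy_Schwarz_ineq2 by (simp add: abs_mult mult_left_mono)
        also have "\<dots> \<le> \<gamma> * (((e / (2 * \<gamma> * CR)) * norm h) * (CR * norm (y - xs)))"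
          using n1 RB[of y] y \<gamma>_pos e CR by (intro mult_left_mono mult_mono) auto
        also have "\<dots> = e / 2 * norm (y - xs) * norm h" using \<gamma>_pos CR by (simp add: field_simps)
        finally show ?thesis .
      qed
      show "\<bar>R y \<bullet> h - \<gamma> * ((J y *v h) \<bullet> R y) - (H *v (y - xs)) \<bullet> h\<bar> \<le> e * norm (y - xs) * norm h"
        unfolding split using t1 t2 abs_triangle_ineq[of "(Q0 *v (R y - A0 *v (y - xs))) \<bullet> h" "\<gamma> * (((J xs - J y) *v h) \<bullet> R y)"]
        by (simp add: field_simps)
    qed
  qed
  obtain c eps where c: "c > 0" "eps > 0"
    and slm: "\<And>y. norm (y - xs) < eps \<Longrightarrow> ereal (f xs) + g xs + ereal (c * (norm (y - xs))\<^sup>2) \<le> ereal (f y) + g y"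
    using xs_slm unfolding strong_local_min_def by blast
  have xs_in: "xs \<in> fb_op \<gamma> Df g xs" using near[of xs] dW Tp_xs by simp
  have gxs: "g xs = ereal (real_of_ereal (g xs))" by (rule fbe_prox(1)[OF g_proper \<gamma>_pos xs_in])
  have fbe_xs: "fbe \<gamma> f Df g xs = f xs + real_of_ereal (g xs)"
    using fbe_prox(2)[OF g_proper \<gamma>_pos xs_in, where f=f] by simp
  have phi_xs: "ereal (f xs) + g xs = ereal (fbe \<gamma> f Df g xs)" unfolding fbe_xs by (subst gxs) simp
  define c1 where "c1 = min a c / 2"
  have c1: "c1 > 0" unfolding c1_def using a_pos c by simp
  define d4 where "d4 = min dW (min dR (eps / Lam))"
  have d4: "d4 > 0" unfolding d4_def using dW dR c Lam by simp
  have slm_b: "fbe \<gamma> f Df g xs + c * (norm (y - xs))\<^sup>2 \<le> v"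
    if "norm (y - xs) < eps" "ereal (f y) + g y \<le> ereal v" for y v
  proof -
    have "ereal (fbe \<gamma> f Df g xs + c * (norm (y - xs))\<^sup>2) = ereal (f xs) + g xs + ereal (c * (norm (y - xs))\<^sup>2)"
      unfolding phi_xs by simp
    also have "\<dots> \<le> ereal (f y) + g y" by (rule slm[OF that(1)])
    also have "\<dots> \<le> ereal v" by (rule that(2))
    finally show ?thesis by simp
  qed
  have QG: "fbe \<gamma> f Df g xs + c1 * (norm (y - xs))\<^sup>2 \<le> fbe \<gamma> f Df g y" if y: "norm (y - xs) < d4" for y
  proof -
    have yW: "norm (y - xs) < dW" and yR: "norm (y - xs) < dR" and ye: "norm (y - xs) < eps / Lam"
      using y unfolding d4_def by auto
    have Tin: "Tp y \<in> fb_op \<gamma> Df g y" using near[OF yW] by simp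
    have sd: "ereal (f (Tp y)) + g (Tp y) \<le> ereal (fbe \<gamma> f Df g y - a * (norm (Tp y - y))\<^sup>2)"
      using suff_dec(1)[OF f_grad Df_lip g_proper \<gamma>_pos Tin] unfolding a_def .
    have "norm (Tp y - xs) \<le> Lam * norm (y - xs)" by (rule Tp_lip[OF yR])
    also have "\<dots> < Lam * (eps / Lam)" using ye Lam by (intro mult_strict_left_mono) auto
    also have "\<dots> = eps" using Lam by simp
    finally have "norm (Tp y - xs) < eps" .
    from slm_b[OF this sd]
    have m: "fbe \<gamma> f Df g xs + c * (norm (Tp y - xs))\<^sup>2 + a * (norm (Tp y - y))\<^sup>2 \<le> fbe \<gamma> f Df g y" by simp
    have "(norm (y - xs))\<^sup>2 \<le> 2 * (norm (Tp y - xs))\<^sup>2 + 2 * (norm (y - Tp y))\<^sup>2"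
      using sq_tri[of "Tp y - xs" "y - Tp y"] by simp
    then have "c1 * (norm (y - xs))\<^sup>2 \<le> c1 * (2 * (norm (Tp y - xs))\<^sup>2 + 2 * (norm (y - Tp y))\<^sup>2)"
      using c1 by (simp add: mult_left_mono)
    also have "\<dots> = min a c * (norm (Tp y - xs))\<^sup>2 + min a c * (norm (Tp y - y))\<^sup>2"
      unfolding c1_def by (simp add: algebra_simps norm_minus_commute)
    also have "\<dots> \<le> c * (norm (Tp y - xs))\<^sup>2 + a * (norm (Tp y - y))\<^sup>2"
      by (intro add_mono mult_right_mono) auto
    finally show ?thesis using m by linarith
  qed
  define M2 where "M2 = L / 2 + 1 / (2 * \<gamma>)"
  have UB: "fbe \<gamma> f Df g y \<le> fbe \<gamma> f Df g xs + M2 * (norm (y - xs))\<^sup>2" if yW: "norm (y - xs) < dW" for y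
  proof -
    have Tin: "Tp y \<in> fb_op \<gamma> Df g y" using near[OF yW] by simp
    have "ereal (fbe \<gamma> f Df g y) \<le> ereal (f y + Df y \<bullet> (xs - y) + (norm (xs - y))\<^sup>2 / (2 * \<gamma>)) + g xs"
      by (rule fbe_prox(3)[OF g_proper \<gamma>_pos Tin])
    also have "\<dots> = ereal (f y + Df y \<bullet> (xs - y) + (norm (xs - y))\<^sup>2 / (2 * \<gamma>) + real_of_ereal (g xs))"
      by (subst gxs) simp
    finally have "fbe \<gamma> f Df g y \<le> f y + Df y \<bullet> (xs - y) + (norm (xs - y))\<^sup>2 / (2 * \<gamma>) + real_of_ereal (g xs)" by simp
    moreover have "f y + Df y \<bullet> (xs - y) - L / 2 * (norm (xs - y))\<^sup>2 \<le> f xs" by (rule descent(2)[OF f_grad Df_lip])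
    ultimately show ?thesis unfolding fbe_xs M2_def by (simp add: algebra_simps norm_minus_commute add_divide_distrib)
  qed
  have hpd: "c1 * (norm h)\<^sup>2 \<le> h \<bullet> (H *v h)" for h
  proof (cases "h = 0")
    case True then show ?thesis by simp
  next
    case False
    then have nh: "norm h > 0" by simp
    have key: "c1 * (norm h)\<^sup>2 \<le> h \<bullet> (H *v h) + e * (norm h)\<^sup>2" if e: "e > 0" for e
    proof -
      obtain dG where dG: "dG > 0" "\<forall>y h'. norm (y - xs) < dG \<longrightarrow>
          \<bar>R y \<bullet> h' - \<gamma> * ((J y *v h') \<bullet> R y) - (H *v (y - xs)) \<bullet> h'\<bar> \<le> e * norm (y - xs) * norm h'"
        using GE[OF e] by blast
      define dd where "dd = min dG d4"
      have dd: "dd > 0" unfolding dd_def using dG d4 by simp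
      define t where "t = dd / (2 * norm h)"
      have t: "t > 0" unfolding t_def using dd nh by simp
      have th: "t * norm h < dd" unfolding t_def using dd nh by simp
      define G where "G s = R (xs + s *\<^sub>R h) \<bullet> h - \<gamma> * ((J (xs + s *\<^sub>R h) *v h) \<bullet> R (xs + s *\<^sub>R h))" for s
      have inb: "norm (xs + s *\<^sub>R h - xs) < dd" if "0 \<le> s" "s \<le> t" for s
      proof -
        have "norm (xs + s *\<^sub>R h - xs) = s * norm h" using that by simp
        also have "\<dots> \<le> t * norm h" using that by (simp add: mult_right_mono)
        finally show ?thesis using th by linarith
      qed
      have "\<exists>z>0. z < t \<and> fbe \<gamma> f Df g (xs + t *\<^sub>R h) - fbe \<gamma> f Df g (xs + 0 *\<^sub>R h) = (t - 0) * G z"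
      proof (rule MVT2)
        fix s assume s: "0 \<le> s" "s \<le> t"
        have "norm (xs + s *\<^sub>R h - xs) < dW" using inb[OF s] unfolding dd_def d4_def by simp
        then show "((\<lambda>s. fbe \<gamma> f Df g (xs + s *\<^sub>R h)) has_real_derivative G s) (at s)"
          unfolding G_def by (intro path_deriv_gen grad) simp
      qed (rule t)
      then obtain z where z: "0 < z" "z < t" "fbe \<gamma> f Df g (xs + t *\<^sub>R h) - fbe \<gamma> f Df g xs = t * G z" by auto
      have zb: "norm (xs + z *\<^sub>R h - xs) < dd" using inb[of z] z by simp
      have Gz: "G z \<le> z * ((H *v h) \<bullet> h + e * (norm h)\<^sup>2)"
      proof -
        have "G z - (H *v (xs + z *\<^sub>R h - xs)) \<bullet> h \<le> e * norm (xs + z *\<^sub>R h - xs) * norm h"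
          using dG(2) zb unfolding G_def dd_def by (meson abs_le_iff min.strict_boundedE)
        moreover have "(H *v (xs + z *\<^sub>R h - xs)) \<bullet> h = z * ((H *v h) \<bullet> h)" by (simp add: matrix_vector_mult_scaleR)
        moreover have "norm (xs + z *\<^sub>R h - xs) = z * norm h" using z by simp
        ultimately show ?thesis using z(1) by (simp add: algebra_simps power2_eq_square)
      qed
      have qg: "fbe \<gamma> f Df g xs + c1 * (norm (xs + t *\<^sub>R h - xs))\<^sup>2 \<le> fbe \<gamma> f Df g (xs + t *\<^sub>R h)"
        using QG[of "xs + t *\<^sub>R h"] inb[of t] t unfolding dd_def by simp
      have "norm (xs + t *\<^sub>R h - xs) = t * norm h" using t by simp
      then have lhs: "c1 * (t * t) * (norm h)\<^sup>2 \<le> t * G z" using qg z(3) by (simp add: power2_eq_square algebra_simps)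
      define X where "X = (H *v h) \<bullet> h + e * (norm h)\<^sup>2"
      have pos: "0 < c1 * (t * t) * (norm h)\<^sup>2" using c1 t nh by simp
      have tG: "t * G z \<le> t * (z * X)" using Gz t unfolding X_def by (simp add: mult_left_mono)
      have Xp: "X > 0"
      proof (rule ccontr)
        assume "\<not> X > 0"
        then have "z * X \<le> 0" using z by (simp add: mult_nonneg_nonpos)
        then have "t * (z * X) \<le> 0" using t by (simp add: mult_nonneg_nonpos)
        then show False using lhs tG pos by linarith
      qed
      have "t * (z * X) \<le> t * (t * X)" using z t Xp by (intro mult_left_mono mult_right_mono) auto
      then have "c1 * (t * t) * (norm h)\<^sup>2 \<le> (t * t) * X" using lhs tG by (simp add: algebra_simps)
      then have "(t * t) * (c1 * (norm h)\<^sup>2) \<le> (t * t) * X" by (simp add: algebra_simps)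
      then have "c1 * (norm h)\<^sup>2 \<le> X" using t by (simp add: mult_le_cancel_left_pos)
      then show ?thesis unfolding X_def by (simp add: inner_commute)
    qed
    show ?thesis
    proof (rule ccontr)
      assume "\<not> c1 * (norm h)\<^sup>2 \<le> h \<bullet> (H *v h)"
      then have Dp: "c1 * (norm h)\<^sup>2 - h \<bullet> (H *v h) > 0" by simp
      define e where "e = (c1 * (norm h)\<^sup>2 - h \<bullet> (H *v h)) / (2 * (norm h)\<^sup>2)"
      have e: "e > 0" unfolding e_def using Dp nh by simp
      have "e * (norm h)\<^sup>2 = (c1 * (norm h)\<^sup>2 - h \<bullet> (H *v h)) / 2" unfolding e_def using nh by simp
      moreover have "c1 * (norm h)\<^sup>2 \<le> h \<bullet> (H *v h) + e * (norm h)\<^sup>2" by (rule key[OF e])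
      ultimately show False using Dp by argo
    qed
  qed
  have min_pos: "min u1 u2 > 0" if "u1 > 0" "u2 > 0" for u1 u2 :: real using that by simp
  have evb: "eventually (\<lambda>k. norm (yy k - zz) < rr) sequentially" if "yy \<longlonglongrightarrow> zz" "rr > 0"
    for yy :: "nat \<Rightarrow> real^'n" and zz rr
    using eventually_in_ball[OF that(1), of zz rr] that(2) by simp
  have QC: "eventually (\<lambda>k. mclose (Q k) Q0 e) sequentially" if e: "e > 0" for e
  proof -
    obtain d where d: "d > 0" "\<forall>y'. norm (y' - xs) < d \<longrightarrow> y' \<in> V \<and> mclose (J y') (J xs) (e / \<gamma>)"
      using JC[of "e / \<gamma>"] e \<gamma>_pos by auto
    show ?thesis
      using evb[OF xb_lim d(1)]
    proof (eventually_elim)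
      case (elim k)
      then have k: "norm (xb k - xs) < d" by simp
      obtain A where A: "A \<in> clarke_jac Df (xb k)" "Q k = mat 1 - \<gamma> *\<^sub>R A" using Q_sel[of k] by blast
      have "mclose A (J xs) (e / \<gamma>)"
      proof (rule clarke_close[OF _ k A(1)])
        fix y assume "norm (y - xs) < d"
        then show "(Df has_derivative (*v) (J y)) (at y) \<and> mclose (J y) (J xs) (e / \<gamma>)"
          using d J(1) by blast
      qed
      from mclose_Q[OF this \<gamma>_pos] show ?case unfolding A(2) Q0_def using \<gamma>_pos by simp
    qed
  qed
  have PC: "eventually (\<lambda>k. mclose (P k) P0 e) sequentially" if e: "e > 0" for e
  proof -
    obtain d where d: "d > 0" "\<forall>z'. norm (z' - zs) < d \<longrightarrow> z' \<in> U \<and> mclose (Jp z') (Jp zs) e"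
      using JpC[OF e] by auto
    have wl: "(\<lambda>k. w (xb k)) \<longlonglongrightarrow> zs" using isCont_tendsto_compose[OF w_cont xb_lim] wxs by simp
    show ?thesis
      using evb[OF wl d(1)]
    proof (eventually_elim)
      case (elim k)
      then have k: "norm (w (xb k) - zs) < d" by simp
      have Pk: "P k \<in> clarke_jac_sv (prox \<gamma> g) (w (xb k))" using P_sel[of k] unfolding w_def .
      show ?case unfolding P0_def
      proof (rule clarke_sv_close[OF _ k Pk])
        fix z assume "norm (z - zs) < d"
        then show "prox \<gamma> g z = {p z} \<and> (p has_derivative (*v) (Jp z)) (at z) \<and> mclose (Jp z) (Jp zs) e"
          using d U(3) Jp(1) by blast
      qed
    qed
  qed
  have BC: "eventually (\<lambda>k. mclose (B k) H e) sequentially" if e: "e > 0" for e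
  proof -
    obtain e' where e': "e' > 0" "\<forall>Q P. mclose Q Q0 e' \<longrightarrow> mclose P P0 e' \<longrightarrow>
       mclose ((1 / \<gamma>) *\<^sub>R (Q ** (mat 1 - P ** Q))) ((1 / \<gamma>) *\<^sub>R (Q0 ** (mat 1 - P0 ** Q0))) e"
      using mclose_B[OF \<gamma>_pos e, of Q0 P0] by blast
    show ?thesis using QC[OF e'(1)] PC[OF e'(1)]
      by eventually_elim (use e'(2) in \<open>simp add: B_def H_def\<close>)
  qed
  have c2: "c1 / 2 > 0" using c1 by simp
  have PDk: "eventually (\<lambda>k. \<forall>h. (c1 / 2) * (norm h)\<^sup>2 \<le> h \<bullet> (B k *v h)) sequentially"
    using BC[OF c2]
  proof eventually_elim
    case (elim k)
    show ?case using pd_close[OF elim hpd] by simp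
  qed
  have s0: "eventually (\<lambda>k. s k = 0) sequentially"
    using PDk
  proof eventually_elim
    case (elim k)
    have "(c1 / 2) * (norm (s k))\<^sup>2 \<le> s k \<bullet> (B k *v s k)" using elim by blast
    also have "\<dots> \<le> 0" using Bss[of k] by (simp add: inner_commute)
    finally show ?case using c1 by (simp add: mult_le_0_iff)
  qed
  have NE: "eventually (\<lambda>k. norm (xb k + d k - xs) \<le> \<eta> * norm (xb k - xs)) sequentially" if eta: "\<eta> > 0" for \<eta>
  proof -
    define e1 where "e1 = \<eta> * c1 / 4"
    have e1: "e1 > 0" unfolding e1_def using eta c1 by simp
    obtain dG where dG: "dG > 0" "\<forall>y h. norm (y - xs) < dG \<longrightarrow>
        \<bar>R y \<bullet> h - \<gamma> * ((J y *v h) \<bullet> R y) - (H *v (y - xs)) \<bullet> h\<bar> \<le> e1 * norm (y - xs) * norm h"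
      using GE[OF e1] by blast
    show ?thesis
      using evb[OF xb_lim, of "min dG dW", OF min_pos[OF dG(1) dW]] BC[OF e1] PDk d_newton
    proof eventually_elim
      case (elim k)
      define y where "y = xb k"
      have yG: "norm (y - xs) < dG" and yW: "norm (y - xs) < dW" using elim(1) unfolding y_def by auto
      obtain v where v: "GDERIV (fbe \<gamma> f Df g) y :> v" "d k = - (matrix_inv (B k) *v v)"
        using elim(4) unfolding y_def by blast
      have "(\<lambda>h. h \<bullet> v) = (\<lambda>h. R y \<bullet> h - \<gamma> * ((J y *v h) \<bullet> R y))"
        using has_derivative_unique[OF v(1)[unfolded gderiv_def] grad[OF yW]] .
      then have vh: "h \<bullet> v = R y \<bullet> h - \<gamma> * ((J y *v h) \<bullet> R y)" for h by meson
      define ey where "ey = y - xs"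
      have vH: "norm (v - H *v ey) \<le> e1 * norm ey"
      proof -
        define hh where "hh = v - H *v ey"
        have "\<bar>hh \<bullet> v - (H *v ey) \<bullet> hh\<bar> \<le> e1 * norm ey * norm hh"
          using dG(2) yG unfolding vh ey_def by blast
        moreover have "hh \<bullet> v - (H *v ey) \<bullet> hh = (norm hh)\<^sup>2"
          unfolding hh_def power2_norm_eq_inner by (simp add: inner_diff_left inner_diff_right inner_commute)
        ultimately have "norm hh * norm hh \<le> (e1 * norm ey) * norm hh" by (simp add: power2_eq_square)
        then have "norm hh \<le> e1 * norm ey"
        proof (cases "norm hh = 0")
          case True then show ?thesis using e1 by simp
        next
          case False
          then have "norm hh > 0" by simp
          then show ?thesis using \<open>norm hh * norm hh \<le> (e1 * norm ey) * norm hh\<close> by (rule mult_right_le_imp_le[rotated])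
        qed
        then show ?thesis unfolding hh_def .
      qed
      have BH: "norm ((B k - H) *v ey) \<le> e1 * norm ey" using elim(2) unfolding mclose_def by blast
      define u where "u = matrix_inv (B k) *v v"
      have PD: "\<And>h. (c1 / 2) * (norm h)\<^sup>2 \<le> h \<bullet> (B k *v h)" using elim(3) by blast
      have Bu: "B k *v u = v" unfolding u_def by (rule pd_inv[OF PD c2])
      have eq: "xb k + d k - xs = ey - u" unfolding ey_def y_def u_def v(2) by simp
      have "B k *v (ey - u) = (B k - H) *v ey + (H *v ey - v)"
        using Bu by (simp add: matrix_vector_mult_diff_distrib matrix_vector_mult_diff_rdistrib)
      then have "norm (B k *v (ey - u)) \<le> norm ((B k - H) *v ey) + norm (H *v ey - v)"
        by (simp add: norm_triangle_ineq)
      then have nB: "norm (B k *v (ey - u)) \<le> 2 * e1 * norm ey"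
        using BH vH norm_minus_commute[of "H *v ey" v] by linarith
      have "norm (ey - u) \<le> (1 / (c1 / 2)) * norm (B k *v (ey - u))" by (rule pd_norm[OF PD c2])
      also have "\<dots> \<le> (1 / (c1 / 2)) * (2 * e1 * norm ey)" using nB c1 by (intro mult_left_mono) auto
      also have "\<dots> = \<eta> * norm ey" unfolding e1_def using c1 by (simp add: field_simps)
      finally show ?case unfolding eq ey_def y_def .
    qed
  qed
  have M2: "M2 \<ge> 0" unfolding M2_def using L0 \<gamma>_pos by simp
  define \<eta>0 where "\<eta>0 = min 1 (c / (M2 + 1))"
  have eta0: "\<eta>0 > 0" "\<eta>0 \<le> 1" "M2 * \<eta>0\<^sup>2 \<le> c"
  proof -
    show "\<eta>0 > 0" unfolding \<eta>0_def using c M2 by simp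
    show "\<eta>0 \<le> 1" unfolding \<eta>0_def by simp
    have "\<eta>0\<^sup>2 \<le> \<eta>0" using \<open>\<eta>0 > 0\<close> \<open>\<eta>0 \<le> 1\<close> by (simp add: power2_eq_square mult_left_le_one_le)
    also have "\<eta>0 \<le> c / (M2 + 1)" unfolding \<eta>0_def by simp
    finally have "M2 * \<eta>0\<^sup>2 \<le> M2 * (c / (M2 + 1))" using M2 by (rule mult_left_mono)
    also have "\<dots> \<le> c" using M2 c by (simp add: field_simps)
    finally show "M2 * \<eta>0\<^sup>2 \<le> c" .
  qed
  have acc: "eventually (\<lambda>k. \<tau> k = 1 \<and> x (Suc k) = xb k + d k) sequentially"
    using NE[OF eta0(1)] s0 evb[OF xb_lim, of "min eps dW", OF min_pos[OF c(2) dW]]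
  proof eventually_elim
    case (elim k)
    have kb: "norm (xb k - xs) < eps" "norm (xb k - xs) < dW" using elim(3) by auto
    have cb: "norm (xb k + d k - xs) \<le> \<eta>0 * norm (xb k - xs)" by (rule elim(1))
    then have "norm (xb k + d k - xs) \<le> norm (xb k - xs)"
      using eta0 mult_left_le_one_le[of "norm (xb k - xs)" \<eta>0] by simp
    then have cW: "norm (xb k + d k - xs) < dW" using kb by simp
    have "fbe \<gamma> f Df g (xb k + d k) \<le> fbe \<gamma> f Df g xs + M2 * (norm (xb k + d k - xs))\<^sup>2" by (rule UB[OF cW])
    also have "M2 * (norm (xb k + d k - xs))\<^sup>2 \<le> M2 * (\<eta>0 * norm (xb k - xs))\<^sup>2"
      using cb M2 by (intro mult_left_mono power_mono) auto
    also have "\<dots> = (M2 * \<eta>0\<^sup>2) * (norm (xb k - xs))\<^sup>2" by (simp add: power_mult_distrib)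
    also have "\<dots> \<le> c * (norm (xb k - xs))\<^sup>2" using eta0(3) by (simp add: mult_right_mono)
    also have "fbe \<gamma> f Df g xs + c * (norm (xb k - xs))\<^sup>2 \<le> fbe \<gamma> f Df g (x k) - \<sigma> * (norm (r k))\<^sup>2"
      by (rule slm_b[OF kb(1) phi_le])
    finally have cond0: "fbe \<gamma> f Df g (xb k + d k) \<le> fbe \<gamma> f Df g (x k) - \<sigma> * (norm (r k))\<^sup>2" by simp
    have cond0': "fbe \<gamma> f Df g (xb k + (\<beta> ^ 0)\<^sup>2 *\<^sub>R d k + \<beta> ^ 0 *\<^sub>R s k)
           \<le> fbe \<gamma> f Df g (x k) - \<sigma> * (norm (r k))\<^sup>2
              + \<mu> / 2 * (\<beta> ^ 0)\<^sup>2 * inner (B k *v s k) (s k)"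
      using cond0 elim(2) by simp
    obtain m where m: "\<tau> k = \<beta> ^ m"
      "\<forall>m'<m. \<not> (fbe \<gamma> f Df g (xb k + (\<beta> ^ m')\<^sup>2 *\<^sub>R d k + \<beta> ^ m' *\<^sub>R s k)
           \<le> fbe \<gamma> f Df g (x k) - \<sigma> * (norm (r k))\<^sup>2
              + \<mu> / 2 * (\<beta> ^ m')\<^sup>2 * inner (B k *v s k) (s k))"
      using ls[of k] by blast
    have "m = 0"
    proof (rule ccontr)
      assume "m \<noteq> 0"
      then have "0 < m" by simp
      then show False using m(2) cond0' by blast
    qed
    then have t1: "\<tau> k = 1" using m(1) by simp
    then show ?case using x_next[of k] elim(2) by simp
  qed
  have ev_tau: "eventually (\<lambda>k. \<tau> k = 1) sequentially" using acc by (rule eventually_mono) simp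
  (* lower bound on the residual *)
  have A0low: "(c1 / MQ) * norm h \<le> norm (A0 *v h)" for h
  proof -
    have "c1 * (norm h)\<^sup>2 \<le> h \<bullet> (H *v h)" by (rule hpd)
    also have "\<dots> \<le> norm h * norm (H *v h)" by (rule Cauchy_Schwarz_ineq2[THEN order_trans[OF abs_ge_self]])
    also have "norm (H *v h) \<le> MQ * norm (A0 *v h)" unfolding H_A0 by (rule MQ(2))
    then have "norm h * norm (H *v h) \<le> norm h * (MQ * norm (A0 *v h))" by (simp add: mult_left_mono)
    finally have *: "c1 * (norm h)\<^sup>2 \<le> norm h * (MQ * norm (A0 *v h))" .
    show ?thesis
    proof (cases "h = 0")
      case True then show ?thesis by simp
    next
      case False
      then have nh: "norm h > 0" by simp
      from * have "norm h * (c1 * norm h) \<le> norm h * (MQ * norm (A0 *v h))" by (simp add: power2_eq_square algebra_simps)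
      then have "c1 * norm h \<le> MQ * norm (A0 *v h)" using nh by (simp add: mult_le_cancel_left_pos)
      then show ?thesis using MQ(1) by (simp add: field_simps)
    qed
  qed
  define K3 where "K3 = 2 * MQ / c1"
  have K3: "K3 > 0" unfolding K3_def using MQ c1 by simp
  obtain dl where dl: "dl > 0" "\<forall>y. norm (y - xs) < dl \<longrightarrow> norm (R y - A0 *v (y - xs)) \<le> (c1 / (2 * MQ)) * norm (y - xs)"
    using RE[of "c1 / (2 * MQ)"] c1 MQ by auto
  have Rlow: "norm (y - xs) \<le> K3 * norm (R y)" if "norm (y - xs) < dl" for y
  proof -
    have "(c1 / MQ) * norm (y - xs) \<le> norm (A0 *v (y - xs))" by (rule A0low)
    also have "\<dots> \<le> norm (R y) + norm (R y - A0 *v (y - xs))" by (metis norm_minus_commute norm_triangle_sub)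
    also have "\<dots> \<le> norm (R y) + (c1 / (2 * MQ)) * norm (y - xs)" using dl that by simp
    moreover have "(c1 / MQ) * norm (y - xs) = 2 * ((c1 / (2 * MQ)) * norm (y - xs))" by simp
    ultimately have "(c1 / (2 * MQ)) * norm (y - xs) \<le> norm (R y)"
      by (smt (verit))
    then show ?thesis unfolding K3_def using c1 MQ by (simp add: field_simps)
  qed
  have ev_x: "eventually (\<lambda>k. xb k = Tp (x k) \<and> norm (x k - xs) < min dl dR) sequentially"
    using xb_T evb[OF x_lim min_pos[OF dl(1) dR(1)]] by eventually_elim simp
  have bnd_k: "eventually (\<lambda>k. norm (xb k - xs) \<le> Lam * norm (x k - xs) \<and> norm (x k - xs) \<le> K3 * norm (r k)) sequentially"
    using ev_x
  proof eventually_elim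
    case (elim k)
    have "R (x k) = r k" unfolding R_def r_def elim[THEN conjunct1, symmetric] ..
    then show ?case using Tp_lip[of "x k"] Rlow[of "x k"] elim by auto
  qed
  have bnd_Suc: "eventually (\<lambda>k. norm (xb (Suc k) - xs) \<le> Lam * norm (x (Suc k) - xs)) sequentially"
  proof -
    have b0: "eventually (\<lambda>k. norm (xb k - xs) \<le> Lam * norm (x k - xs)) sequentially"
      using bnd_k by (rule eventually_mono) simp
    show ?thesis by (rule eventually_sequentially_Suc[THEN iffD2, OF b0])
  qed
  have main: "eventually (\<lambda>k. norm (x (Suc k) - xs) \<le> \<eta> * norm (xb k - xs)) sequentially" if "\<eta> > 0" for \<eta>
    using NE[OF that] acc by eventually_elim simp
  have sx: "superlinear_conv x xs"
    unfolding superlinear_conv_def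
  proof (intro conjI x_lim allI impI)
    fix \<epsilon> :: real assume e: "\<epsilon> > 0"
    show "eventually (\<lambda>k. norm (x (Suc k) - xs) \<le> \<epsilon> * norm (x k - xs)) sequentially"
      using main[OF divide_pos_pos[OF e Lam]] bnd_k
    proof eventually_elim
      case (elim k)
      have "norm (x (Suc k) - xs) \<le> \<epsilon> / Lam * norm (xb k - xs)" using elim(1) e Lam by simp
      also have "\<dots> \<le> \<epsilon> / Lam * (Lam * norm (x k - xs))" using elim(2) e Lam by (intro mult_left_mono) auto
      also have "\<dots> = \<epsilon> * norm (x k - xs)" using Lam by simp
      finally show ?case .
    qed
  qed
  have sxb: "superlinear_conv xb xs"
    unfolding superlinear_conv_def
  proof (intro conjI xb_lim allI impI)
    fix \<epsilon> :: real assume e: "\<epsilon> > 0"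
    show "eventually (\<lambda>k. norm (xb (Suc k) - xs) \<le> \<epsilon> * norm (xb k - xs)) sequentially"
      using main[OF divide_pos_pos[OF e Lam]] bnd_Suc
    proof eventually_elim
      case (elim k)
      have "norm (xb (Suc k) - xs) \<le> Lam * norm (x (Suc k) - xs)" by (rule elim(2))
      also have "\<dots> \<le> Lam * (\<epsilon> / Lam * norm (xb k - xs))" using elim(1) e Lam by (intro mult_left_mono) auto
      also have "\<dots> = \<epsilon> * norm (xb k - xs)" using Lam by simp
      finally show ?case .
    qed
  qed
  have sr: "superlinear_conv r 0"
    unfolding superlinear_conv_def
  proof (intro conjI r_lim allI impI)
    fix \<epsilon> :: real assume e: "\<epsilon> > 0"
    define \<eta> where "\<eta> = \<epsilon> * \<gamma> / ((1 + Lam) * Lam * K3)"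
    have eta: "\<eta> > 0" unfolding \<eta>_def using e \<gamma>_pos Lam K3 by simp
    show "eventually (\<lambda>k. norm (r (Suc k) - 0) \<le> \<epsilon> * norm (r k - 0)) sequentially"
      using main[OF eta] bnd_Suc bnd_k
    proof eventually_elim
      case (elim k)
      have rS: "norm (r (Suc k)) = (1 / \<gamma>) * norm (x (Suc k) - xb (Suc k))" unfolding r_def using \<gamma>_pos by simp
      have "norm (x (Suc k) - xb (Suc k)) \<le> norm (x (Suc k) - xs) + norm (xb (Suc k) - xs)"
        using norm_triangle_ineq4[of "x (Suc k) - xs" "xb (Suc k) - xs"] by simp
      also have "\<dots> \<le> (1 + Lam) * norm (x (Suc k) - xs)" using elim(2) by (simp add: algebra_simps)
      also have "\<dots> \<le> (1 + Lam) * (\<eta> * norm (xb k - xs))" using elim(1) Lam by (intro mult_left_mono) auto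
      also have "\<dots> \<le> (1 + Lam) * (\<eta> * (Lam * (K3 * norm (r k))))"
        using elim(3) Lam eta by (intro mult_left_mono) (auto intro: order_trans)
      finally have nx: "norm (x (Suc k) - xb (Suc k)) \<le> (1 + Lam) * (\<eta> * (Lam * (K3 * norm (r k))))" .
      have "norm (r (Suc k)) \<le> (1 / \<gamma>) * ((1 + Lam) * (\<eta> * (Lam * (K3 * norm (r k)))))"
        unfolding rS using nx \<gamma>_pos by (intro mult_left_mono) auto
      also have "\<dots> = \<epsilon> * norm (r k)"
      proof -
        have P: "(1 + Lam) * Lam * K3 > 0" using Lam K3 by simp
        have nz: "1 + Lam \<noteq> 0" "Lam \<noteq> 0" "K3 \<noteq> 0" using Lam K3 by auto
        have e1: "\<eta> * ((1 + Lam) * Lam * K3) = \<epsilon> * \<gamma>" unfolding \<eta>_def using nz by simp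
        have "(1 / \<gamma>) * ((1 + Lam) * (\<eta> * (Lam * (K3 * norm (r k)))))
            = (1 / \<gamma>) * ((\<eta> * ((1 + Lam) * Lam * K3)) * norm (r k))" by (simp add: ac_simps)
        also have "\<dots> = \<epsilon> * norm (r k)" unfolding e1 using \<gamma>_pos by simp
        finally show ?thesis .
      qed
      finally show ?case by simp
    qed
  qed
  show ?thesis using ev_tau sx sxb sr by blast
qed


end
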